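(* Let $\Gamma$ be a compact and connected metric graph. (i) A vector bundle $E$ of rank $n$ on $\Gamma$ is isomorphic to $E(\lambda)$ for some $S_n\ltimes\mathbb{R}^n$-local system $\lambda$ if and only if $E$ is semistable and of degree zero. Moreover, $E(\lambda)$ is stable if and only if the representation $\pi_1(\Gamma)\to S_n$ associated to $\lambda$ is indecomposable. (ii) Two $S_n\ltimes\mathbb{R}^n$-local systems $\lambda_1,\lambda_2$ give rise to isomorphic vector bundles $E(\lambda_1)\simeq E(\lambda_2)$ if and only if they define the same cover $f:\widetilde\Gamma\to\Gamma$ and the classes of the induced $\mathbb{R}$-local systems $\widetilde\lambda_1,\widetilde\lambda_2$ in $\mathrm{Jac}(\widetilde\Gamma)$ are equal.
   Context: Metric graphs, piecewise linear functions with integer slopes, divisors, $\mathrm{div}$, and the sheaf $\mathcal{H}_\Gamma$ of harmonic functions (piecewise linear functions $f$ with $\mathrm{div}(f)=0$, i.e. affine with integer slope along edges and with outgoing slopes summing to zero at every point) are as usual in tropical geometry. A vector bundle of rank $n$ on $\Gamma$ is a torsor under the sheaf of groups $S_n\ltimes\mathcal{H}_\Gamma^n$; with respect to an oriented simple model and its star cover it is given by transition data $(\sigma^e,g^e_1,\dots,g^e_n)$ on edges $e$ ($\sigma^e\in S_n$, $g^e_i$ affine with integer slope), viewed as a matrix over $\mathbb{T}=\mathbb{R}\cup\{\infty\}$ with finite entries $g^e_{i\sigma^e(i)}=g^e_i$. Its degree is the sum over edges of the slopes of all finite entries; its slope is $\mu(E)=\deg E/\mathrm{rk}\,E$. A rank-$m$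 bundle $F$ is a subbundle of $E$ if transition data can be chosen so that each transition matrix of $E$ has the block form $\begin{bmatrix} h^e & \ast\\ \infty & \ast\end{bmatrix}$ with $h^e$ the transition matrix of $F$. $E$ is semistable if $\mu(F)\le\mu(E)$ for all subbundles $F$, stable if the inequality is strict for proper nonzero subbundles. The constant functions give a subsheaf $\mathbb{R}\subset\mathcal{H}_\Gamma$ and hence a subsheaf $S_n\ltimes\mathbb{R}^n\subset S_n\ltimes\mathcal{H}^n_\Gamma$. An $S_n\ltimes\mathbb{R}^n$-local system $\lambda$ is a torsor under this locally constant sheaf; $E(\lambda)$ is the vector bundle obtained by extension of structure sheaf (a vector bundle with constant transition functions). The $S_n$-part of $\lambda$ gives a representation $\pi_1(\Gamma)\to S_n$ (up to conjugacy) and thus a free cover $f:\widetilde\Gamma\to\Gamma$ of degree $n$ (isometric covering map, $\widetilde\Gamma$ possibly disconnected), and there is an $\mathbb{R}$-local system $\widetilde\lambda$ on $\widetilde\Gamma$ with $f_\ast\widetilde\lambda=\lambda$; both are unique up to isomorphism. The representation is called indecomposable if it is transitive on $\{1,\dots,n\}$. The sheaf $\Omega_{\widetilde\Gamma}$ of harmonic $1$-forms is defined by the exact sequence $0\to\mathbb{R}\to\mathcal{H}_{\widetilde\Gamma}\to\Omega_{\widetilde\Gamma}\to0$, and $\mathrm{Jac}(\widetilde\Gamma)=H^1(\widetilde\Gamma,\mathbb{R})/\Omega_{\widetilde\Gamma}(\widetilde\Gamma)$, the quotient by the image of the connecting homomorphism; the class of $\widetilde\lambda$ is the image of its class in $H^1(\widetilde\Gamma,\mathbb{R})$.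 *)

theory Defs
  imports Complex_Main "HOL-Combinatorics.Permutations"
begin

text \<open>A point of edge e is described by its parameter t in the open interval (0, len e),
the distance from the source.\<close>

record ('v, 'e) mgraph =
  mg_verts :: "'v set"
  mg_edges :: "'e set"
  mg_src   :: "'e \<Rightarrow> 'v"
  mg_tgt   :: "'e \<Rightarrow> 'v"
  mg_len   :: "'e \<Rightarrow> real"

definition simple_model :: "('v,'e) mgraph \<Rightarrow> bool" where
  "simple_model G \<longleftrightarrow> finite (mg_verts G) \<and> mg_verts G \<noteq> {} \<and> finite (mg_edges G) \<and>
     (\<forall>e\<in>mg_edges G. mg_src G e \<in> mg_verts G \<and> mg_tgt G e \<in> mg_verts G \<and>
        mg_src G e \<noteq> mg_tgt G e \<and> mg_len G e > 0) \<and>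
     (\<forall>e\<in>mg_edges G. \<forall>e'\<in>mg_edges G.
        {mg_src G e, mg_tgt G e} = {mg_src G e', mg_tgt G e'} \<longrightarrow> e = e')"

text \<open>Walks: lists of (edge, direction); True = traversed from source to target.\<close>

fun is_walk :: "('v,'e) mgraph \<Rightarrow> 'v \<Rightarrow> ('e \<times> bool) list \<Rightarrow> 'v \<Rightarrow> bool" where
  "is_walk G v [] u \<longleftrightarrow> v = u"
| "is_walk G v ((e, True) # w) u \<longleftrightarrow>
     e \<in> mg_edges G \<and> mg_src G e = v \<and> is_walk G (mg_tgt G e) w u"
| "is_walk G v ((e, False) # w) u \<longleftrightarrow>
     e \<in> mg_edges G \<and> mg_tgt G e = v \<and> is_walk G (mg_src G e) w u"

definition connected_mgraph :: "('v,'e) mgraph \<Rightarrow> bool" where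
  "connected_mgraph G \<longleftrightarrow> (\<forall>u\<in>mg_verts G. \<forall>v\<in>mg_verts G. \<exists>w. is_walk G u w v)"

definition compact_connected_metric_graph :: "('v,'e) mgraph \<Rightarrow> bool" where
  "compact_connected_metric_graph G \<longleftrightarrow> simple_model G \<and> connected_mgraph G"

text \<open>An element evaluated at a point: a permutation sigma of {..<n} and values g_i;
as a tropical matrix its finite entries are at (i, sigma i) with value g i.
Tropical matrix product: (sigma,g)(tau,h) = (tau o sigma, i \<mapsto> g i + h (sigma i)).\<close>

definition gmult :: "(nat \<Rightarrow> nat) \<times> (nat \<Rightarrow> real) \<Rightarrow> (nat \<Rightarrow> nat) \<times> (nat \<Rightarrow> real)
     \<Rightarrow> (nat \<Rightarrow> nat) \<times> (nat \<Rightarrow> real)" where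
  "gmult x y = (fst y \<circ> fst x, \<lambda>i. snd x i + snd y (fst x i))"

definition geq :: "nat \<Rightarrow> (nat \<Rightarrow> nat) \<times> (nat \<Rightarrow> real) \<Rightarrow> (nat \<Rightarrow> nat) \<times> (nat \<Rightarrow> real) \<Rightarrow> bool" where
  "geq n x y \<longleftrightarrow> (\<forall>i<n. fst x i = fst y i \<and> snd x i = snd y i)"

text \<open>Transition data on an edge: permutation sigma^e and affine functions
g^e_i(t) = a_i + s_i * t with integer slopes s_i (slope along the orientation).\<close>

type_synonym 'e tdata = "'e \<Rightarrow> (nat \<Rightarrow> nat) \<times> (nat \<Rightarrow> real) \<times> (nat \<Rightarrow> int)"

definition tr_at :: "(nat \<Rightarrow> nat) \<times> (nat \<Rightarrow> real) \<times> (nat \<Rightarrow> int) \<Rightarrow> real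
     \<Rightarrow> (nat \<Rightarrow> nat) \<times> (nat \<Rightarrow> real)" where
  "tr_at x t = (fst x, \<lambda>i. fst (snd x) i + real_of_int (snd (snd x) i) * t)"

definition vbundle :: "('v,'e) mgraph \<Rightarrow> nat \<Rightarrow> 'e tdata \<Rightarrow> bool" where
  "vbundle G n D \<longleftrightarrow> (\<forall>e\<in>mg_edges G. fst (D e) permutes {..<n})"

text \<open>A section of S_n \<ltimes> H^n over the open star of v: a permutation tau, values b_i at v,
and integer outgoing slopes r i e on the incident edges, summing to zero at v
(harmonicity).\<close>

type_synonym 'e ssec = "(nat \<Rightarrow> nat) \<times> (nat \<Rightarrow> real) \<times> (nat \<Rightarrow> 'e \<Rightarrow> int)"

definition star_sec :: "('v,'e) mgraph \<Rightarrow> nat \<Rightarrow> 'v \<Rightarrow> 'e ssec \<Rightarrow> bool" where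
  "star_sec G n v s \<longleftrightarrow> fst s permutes {..<n} \<and>
     (\<forall>i<n. (\<Sum>e\<in>{e\<in>mg_edges G. mg_src G e = v \<or> mg_tgt G e = v}. snd (snd s) i e) = 0)"

definition sec_at :: "('v,'e) mgraph \<Rightarrow> 'v \<Rightarrow> 'e ssec \<Rightarrow> 'e \<Rightarrow> real
     \<Rightarrow> (nat \<Rightarrow> nat) \<times> (nat \<Rightarrow> real)" where
  "sec_at G v s e t = (fst s, \<lambda>i. fst (snd s) i + real_of_int (snd (snd s) i e) *
        (if v = mg_src G e then t else mg_len G e - t))"

text \<open>Isomorphism of rank n bundles given by transition data on the same model:
there are sections phi_v over the stars with phi_u A'^e = A^e phi_v on each edge e = (u \<rightarrow> v).\<close>

definition bundle_iso :: "('v,'e) mgraph \<Rightarrow> nat \<Rightarrow> 'e tdata \<Rightarrow> 'e tdata \<Rightarrow> bool" where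
  "bundle_iso G n D D' \<longleftrightarrow> vbundle G n D \<and> vbundle G n D' \<and>
     (\<exists>\<phi> :: 'v \<Rightarrow> 'e ssec. (\<forall>v\<in>mg_verts G. star_sec G n v (\<phi> v)) \<and>
        (\<forall>e\<in>mg_edges G. \<forall>t. 0 < t \<and> t < mg_len G e \<longrightarrow>
           geq n (gmult (sec_at G (mg_src G e) (\<phi> (mg_src G e)) e t) (tr_at (D' e) t))
                 (gmult (tr_at (D e) t) (sec_at G (mg_tgt G e) (\<phi> (mg_tgt G e)) e t))))"

definition degree :: "('v,'e) mgraph \<Rightarrow> nat \<Rightarrow> 'e tdata \<Rightarrow> int" where
  "degree G n D = (\<Sum>e\<in>mg_edges G. \<Sum>i<n. snd (snd (D e)) i)"

definition slope :: "('v,'e) mgraph \<Rightarrow> nat \<Rightarrow> 'e tdata \<Rightarrow> real" where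
  "slope G n D = real_of_int (degree G n D) / real n"

definition restrict_td :: "nat \<Rightarrow> 'e tdata \<Rightarrow> 'e tdata" where
  "restrict_td m D = (\<lambda>e. ((\<lambda>i. if i < m then fst (D e) i else i), fst (snd (D e)), snd (snd (D e))))"

text \<open>F (rank m) is a subbundle of E (rank n): transition data of E can be chosen so that
every transition matrix has block form [h^e, *; \<infinity>, *] (rows i \<ge> m have their finite
entry in a column \<ge> m) with h^e transition data of (a bundle isomorphic to) F.\<close>
definition subbundle :: "('v,'e) mgraph \<Rightarrow> nat \<Rightarrow> 'e tdata \<Rightarrow> nat \<Rightarrow> 'e tdata \<Rightarrow> bool" where
  "subbundle G m F n D \<longleftrightarrow> m \<le> n \<and> vbundle G m F \<and>
     (\<exists>D'. bundle_iso G n D D' \<and>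
        (\<forall>e\<in>mg_edges G. \<forall>i<n. m \<le> i \<longrightarrow> m \<le> fst (D' e) i) \<and>
        bundle_iso G m F (restrict_td m D'))"

definition semistable :: "('v,'e) mgraph \<Rightarrow> nat \<Rightarrow> 'e tdata \<Rightarrow> bool" where
  "semistable G n D \<longleftrightarrow> vbundle G n D \<and>
     (\<forall>m F. 0 < m \<longrightarrow> subbundle G m F n D \<longrightarrow> slope G m F \<le> slope G n D)"

definition stable :: "('v,'e) mgraph \<Rightarrow> nat \<Rightarrow> 'e tdata \<Rightarrow> bool" where
  "stable G n D \<longleftrightarrow> vbundle G n D \<and>
     (\<forall>m F. 0 < m \<longrightarrow> m < n \<longrightarrow> subbundle G m F n D \<longrightarrow> slope G m F < slope G n D)"

type_synonym 'e lsys = "'e \<Rightarrow> (nat \<Rightarrow> nat) \<times> (nat \<Rightarrow> real)"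

definition local_system :: "('v,'e) mgraph \<Rightarrow> nat \<Rightarrow> 'e lsys \<Rightarrow> bool" where
  "local_system G n L \<longleftrightarrow> (\<forall>e\<in>mg_edges G. fst (L e) permutes {..<n})"

definition E_of :: "'e lsys \<Rightarrow> 'e tdata" where
  "E_of L = (\<lambda>e. (fst (L e), snd (L e), \<lambda>_. 0))"

text \<open>Monodromy (path lifting in the cover) of a walk acting on sheet indices.\<close>
fun transport :: "('e \<Rightarrow> nat \<Rightarrow> nat) \<Rightarrow> ('e \<times> bool) list \<Rightarrow> nat \<Rightarrow> nat" where
  "transport \<sigma> [] i = i"
| "transport \<sigma> ((e, True) # w) i = transport \<sigma> w (\<sigma> e i)"
| "transport \<sigma> ((e, False) # w) i = transport \<sigma> w (inv (\<sigma> e) i)"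

text \<open>The representation pi_1(Gamma, v0) \<rightarrow> S_n is transitive on {..<n}.\<close>
definition indecomposable :: "('v,'e) mgraph \<Rightarrow> nat \<Rightarrow> 'e lsys \<Rightarrow> bool" where
  "indecomposable G n L \<longleftrightarrow> (\<forall>v0\<in>mg_verts G. \<forall>i<n. \<forall>j<n.
     \<exists>w. is_walk G v0 w v0 \<and> transport (\<lambda>e. fst (L e)) w i = j)"

text \<open>The cover of lambda has vertices (v,i), i<n, and edges (e,i) from (src e, i) to
(tgt e, sigma^e i) of length len e; the R-local system tilde-lambda has transition
constant snd (lambda e) i on the edge (e,i).
An isomorphism of covers over Gamma from the cover of lambda1 to that of lambda2 is
given by permutations pi_v of the fibres over the vertices compatible with edges.\<close>
definition cover_iso :: "('v,'e) mgraph \<Rightarrow> nat \<Rightarrow> 'e lsys \<Rightarrow> 'e lsys \<Rightarrow> ('v \<Rightarrow> nat \<Rightarrow> nat) \<Rightarrow> bool" where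
  "cover_iso G n L1 L2 \<pi> \<longleftrightarrow> (\<forall>v\<in>mg_verts G. \<pi> v permutes {..<n}) \<and>
     (\<forall>e\<in>mg_edges G. \<forall>i<n. \<pi> (mg_tgt G e) (fst (L1 e) i) = fst (L2 e) (\<pi> (mg_src G e) i))"

text \<open>Equality of classes in Jac(cover of lambda1) = H^1(R)/Omega, where tilde-lambda2 is
transported along the cover isomorphism pi. H^1 is computed on the star cover: edge
cochains modulo coboundaries a(tgt) - a(src); the image of the global harmonic 1-forms
(integer flows omega, Kirchhoff condition at every vertex of the cover) under the
connecting homomorphism is the set of cochains len * omega.\<close>
definition same_jac_class :: "('v,'e) mgraph \<Rightarrow> nat \<Rightarrow> 'e lsys \<Rightarrow> 'e lsys \<Rightarrow> ('v \<Rightarrow> nat \<Rightarrow> nat) \<Rightarrow> bool" where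
  "same_jac_class G n L1 L2 \<pi> \<longleftrightarrow>
     (\<exists>(a :: 'v \<Rightarrow> nat \<Rightarrow> real) (\<omega> :: 'e \<Rightarrow> nat \<Rightarrow> int).
        (\<forall>v\<in>mg_verts G. \<forall>j<n.
           (\<Sum>e\<in>{e\<in>mg_edges G. mg_src G e = v}. \<omega> e j)
           = (\<Sum>p\<in>{(e,i). e \<in> mg_edges G \<and> i < n \<and> mg_tgt G e = v \<and> fst (L1 e) i = j}.
                 \<omega> (fst p) (snd p))) \<and>
        (\<forall>e\<in>mg_edges G. \<forall>i<n.
           snd (L1 e) i - snd (L2 e) (\<pi> (mg_src G e) i)
           = a (mg_tgt G e) (fst (L1 e) i) - a (mg_src G e) i
             + mg_len G e * real_of_int (\<omega> e i)))"

end

theory Submission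
  imports Defs
begin


lemma affine_eq:
  fixes l A B C E :: real assumes "l > 0"
  shows "(\<forall>t. 0 < t \<and> t < l \<longrightarrow> A + B*t = C + E*t) \<longleftrightarrow> A = C \<and> B = E"
proof
  assume h: "\<forall>t. 0 < t \<and> t < l \<longrightarrow> A + B*t = C + E*t"
  have 1: "A + B*(l/2) = C + E*(l/2)" using h[rule_format, of "l/2"] assms by simp
  have 2: "A + B*(l/4) = C + E*(l/4)" using h[rule_format, of "l/4"] assms by simp
  have a: "A - C = (E - B)*(l/2)" using 1 by (simp add: algebra_simps)
  have b: "A - C = (E - B)*(l/4)" using 2 by (simp add: algebra_simps)
  have "B = E" using a b assms by (auto simp: field_simps)
  thus "A = C \<and> B = E" using 1 by simp
qed auto

lemma edge_cond:
  assumes l: "0 < mg_len G e" and ne: "mg_src G e \<noteq> mg_tgt G e"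
  shows "(\<forall>t. 0 < t \<and> t < mg_len G e \<longrightarrow>
           geq n (gmult (sec_at G (mg_src G e) s1 e t) (tr_at d' t))
                 (gmult (tr_at d t) (sec_at G (mg_tgt G e) s2 e t)))
   \<longleftrightarrow> (\<forall>i<n. fst d' (fst s1 i) = fst s2 (fst d i) \<and>
        snd (snd s1) i e + snd (snd d') (fst s1 i) = snd (snd d) i - snd (snd s2) (fst d i) e \<and>
        fst (snd s1) i + fst (snd d') (fst s1 i) = fst (snd d) i + fst (snd s2) (fst d i)
           + real_of_int (snd (snd s2) (fst d i) e) * mg_len G e)"
    (is "?L \<longleftrightarrow> ?R")
proof -
  define l where "l = mg_len G e"
  have val: "\<And>i. (\<forall>t. 0 < t \<and> t < l \<longrightarrow>
      fst (snd s1) i + real_of_int (snd (snd s1) i e) * t + (fst (snd d') (fst s1 i) + real_of_int (snd (snd d') (fst s1 i)) * t)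
    = fst (snd d) i + real_of_int (snd (snd d) i) * t + (fst (snd s2) (fst d i) + real_of_int (snd (snd s2) (fst d i) e) * (l - t)))
    \<longleftrightarrow> (snd (snd s1) i e + snd (snd d') (fst s1 i) = snd (snd d) i - snd (snd s2) (fst d i) e \<and>
        fst (snd s1) i + fst (snd d') (fst s1 i) = fst (snd d) i + fst (snd s2) (fst d i)
           + real_of_int (snd (snd s2) (fst d i) e) * l)"
  proof -
    fix i
    let ?A = "fst (snd s1) i + fst (snd d') (fst s1 i)"
    let ?B = "real_of_int (snd (snd s1) i e) + real_of_int (snd (snd d') (fst s1 i))"
    let ?C = "fst (snd d) i + fst (snd s2) (fst d i) + real_of_int (snd (snd s2) (fst d i) e) * l"
    let ?E = "real_of_int (snd (snd d) i) - real_of_int (snd (snd s2) (fst d i) e)"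
    have "\<And>t. (fst (snd s1) i + real_of_int (snd (snd s1) i e) * t + (fst (snd d') (fst s1 i) + real_of_int (snd (snd d') (fst s1 i)) * t)
    = fst (snd d) i + real_of_int (snd (snd d) i) * t + (fst (snd s2) (fst d i) + real_of_int (snd (snd s2) (fst d i) e) * (l - t)))
      \<longleftrightarrow> ?A + ?B * t = ?C + ?E * t"
      by (simp add: algebra_simps)
    hence "(\<forall>t. 0 < t \<and> t < l \<longrightarrow>
      fst (snd s1) i + real_of_int (snd (snd s1) i e) * t + (fst (snd d') (fst s1 i) + real_of_int (snd (snd d') (fst s1 i)) * t)
    = fst (snd d) i + real_of_int (snd (snd d) i) * t + (fst (snd s2) (fst d i) + real_of_int (snd (snd s2) (fst d i) e) * (l - t)))
      \<longleftrightarrow> ?A = ?C \<and> ?B = ?E" using affine_eq[of l ?A ?B ?C ?E] l unfolding l_def by simp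
    also have "\<dots> \<longleftrightarrow> (snd (snd s1) i e + snd (snd d') (fst s1 i) = snd (snd d) i - snd (snd s2) (fst d i) e \<and>
        fst (snd s1) i + fst (snd d') (fst s1 i) = fst (snd d) i + fst (snd s2) (fst d i)
           + real_of_int (snd (snd s2) (fst d i) e) * l)"
      by (metis (no_types, opaque_lifting) of_int_add of_int_diff of_int_eq_iff)
    finally show "?thesis i" .
  qed
  have ex: "\<exists>t. 0 < t \<and> t < l" using l unfolding l_def by (intro exI[of _ "mg_len G e/2"]) simp
  have "?L \<longleftrightarrow> (\<forall>t. 0 < t \<and> t < l \<longrightarrow> (\<forall>i<n. fst d' (fst s1 i) = fst s2 (fst d i) \<and>
      fst (snd s1) i + real_of_int (snd (snd s1) i e) * t + (fst (snd d') (fst s1 i) + real_of_int (snd (snd d') (fst s1 i)) * t)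
    = fst (snd d) i + real_of_int (snd (snd d) i) * t + (fst (snd s2) (fst d i) + real_of_int (snd (snd s2) (fst d i) e) * (l - t))))"
    unfolding geq_def gmult_def tr_at_def sec_at_def l_def using ne by simp
  also have "\<dots> \<longleftrightarrow> (\<forall>i<n. fst d' (fst s1 i) = fst s2 (fst d i) \<and> (\<forall>t. 0 < t \<and> t < l \<longrightarrow>
      fst (snd s1) i + real_of_int (snd (snd s1) i e) * t + (fst (snd d') (fst s1 i) + real_of_int (snd (snd d') (fst s1 i)) * t)
    = fst (snd d) i + real_of_int (snd (snd d) i) * t + (fst (snd s2) (fst d i) + real_of_int (snd (snd s2) (fst d i) e) * (l - t))))"
    using ex by blast
  also have "\<dots> \<longleftrightarrow> ?R" using val unfolding l_def by simp
  finally show ?thesis .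
qed

definition iso_data :: "('v,'e) mgraph \<Rightarrow> nat \<Rightarrow> 'e tdata \<Rightarrow> 'e tdata \<Rightarrow> ('v \<Rightarrow> 'e ssec) \<Rightarrow> bool" where
  "iso_data G n D D' \<phi> \<longleftrightarrow> (\<forall>v\<in>mg_verts G. star_sec G n v (\<phi> v)) \<and>
   (\<forall>e\<in>mg_edges G. \<forall>i<n.
      fst (D' e) (fst (\<phi> (mg_src G e)) i) = fst (\<phi> (mg_tgt G e)) (fst (D e) i) \<and>
      snd (snd (\<phi> (mg_src G e))) i e + snd (snd (D' e)) (fst (\<phi> (mg_src G e)) i)
        = snd (snd (D e)) i - snd (snd (\<phi> (mg_tgt G e))) (fst (D e) i) e \<and>
      fst (snd (\<phi> (mg_src G e))) i + fst (snd (D' e)) (fst (\<phi> (mg_src G e)) i)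
        = fst (snd (D e)) i + fst (snd (\<phi> (mg_tgt G e))) (fst (D e) i)
          + real_of_int (snd (snd (\<phi> (mg_tgt G e))) (fst (D e) i) e) * mg_len G e)"

lemma bundle_iso_iff:
  assumes "simple_model G"
  shows "bundle_iso G n D D' \<longleftrightarrow> vbundle G n D \<and> vbundle G n D' \<and> (\<exists>\<phi>. iso_data G n D D' \<phi>)"
proof -
  have "\<And>\<phi> e. e \<in> mg_edges G \<Longrightarrow> (\<forall>t. 0 < t \<and> t < mg_len G e \<longrightarrow>
           geq n (gmult (sec_at G (mg_src G e) (\<phi> (mg_src G e)) e t) (tr_at (D' e) t))
                 (gmult (tr_at (D e) t) (sec_at G (mg_tgt G e) (\<phi> (mg_tgt G e)) e t)))
    \<longleftrightarrow> (\<forall>i<n.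
      fst (D' e) (fst (\<phi> (mg_src G e)) i) = fst (\<phi> (mg_tgt G e)) (fst (D e) i) \<and>
      snd (snd (\<phi> (mg_src G e))) i e + snd (snd (D' e)) (fst (\<phi> (mg_src G e)) i)
        = snd (snd (D e)) i - snd (snd (\<phi> (mg_tgt G e))) (fst (D e) i) e \<and>
      fst (snd (\<phi> (mg_src G e))) i + fst (snd (D' e)) (fst (\<phi> (mg_src G e)) i)
        = fst (snd (D e)) i + fst (snd (\<phi> (mg_tgt G e))) (fst (D e) i)
          + real_of_int (snd (snd (\<phi> (mg_tgt G e))) (fst (D e) i) e) * mg_len G e)"
    by (rule edge_cond) (use assms in \<open>auto simp: simple_model_def\<close>)
  note h = this
  show ?thesis unfolding bundle_iso_def iso_data_def
    by (simp add: h)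
qed



definition kdeg :: "('v,'e) mgraph \<Rightarrow> 'e tdata \<Rightarrow> ('v \<Rightarrow> nat set) \<Rightarrow> int" where
  "kdeg G D K = (\<Sum>e\<in>mg_edges G. \<Sum>i\<in>K (mg_src G e). snd (snd (D e)) i)"

definition inv_fam :: "('v,'e) mgraph \<Rightarrow> nat \<Rightarrow> ('e \<Rightarrow> nat \<Rightarrow> nat) \<Rightarrow> ('v \<Rightarrow> nat set) \<Rightarrow> bool" where
  "inv_fam G n \<sigma> K \<longleftrightarrow> (\<forall>v\<in>mg_verts G. K v \<subseteq> {..<n}) \<and>
     (\<forall>e\<in>mg_edges G. \<forall>i<n. i \<in> K (mg_src G e) \<longleftrightarrow> \<sigma> e i \<in> K (mg_tgt G e))"

lemma sm_facts:
  assumes "simple_model G"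
  shows "finite (mg_verts G)" "finite (mg_edges G)"
    "\<And>e. e \<in> mg_edges G \<Longrightarrow> mg_src G e \<in> mg_verts G"
    "\<And>e. e \<in> mg_edges G \<Longrightarrow> mg_tgt G e \<in> mg_verts G"
    "\<And>e. e \<in> mg_edges G \<Longrightarrow> mg_src G e \<noteq> mg_tgt G e"
    "\<And>e. e \<in> mg_edges G \<Longrightarrow> mg_len G e > 0"
  using assms unfolding simple_model_def by auto

lemma inv_fam_bij:
  assumes "inv_fam G n \<sigma> K" "\<sigma> e permutes {..<n}" "e \<in> mg_edges G"
    "mg_src G e \<in> mg_verts G" "mg_tgt G e \<in> mg_verts G"
  shows "bij_betw (\<sigma> e) (K (mg_src G e)) (K (mg_tgt G e))"
proof -
  have s: "K (mg_src G e) \<subseteq> {..<n}" and t: "K (mg_tgt G e) \<subseteq> {..<n}"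
    using assms unfolding inv_fam_def by auto
  have inj: "inj_on (\<sigma> e) (K (mg_src G e))" using assms(2) permutes_inj_on by blast
  have "\<sigma> e ` K (mg_src G e) = K (mg_tgt G e)"
  proof
    show "\<sigma> e ` K (mg_src G e) \<subseteq> K (mg_tgt G e)" using assms s unfolding inv_fam_def by auto
  next
    show "K (mg_tgt G e) \<subseteq> \<sigma> e ` K (mg_src G e)"
    proof
      fix j assume j: "j \<in> K (mg_tgt G e)"
      have jn: "j < n" using j t by auto
      define i where "i = inv (\<sigma> e) j"
      have ij: "\<sigma> e i = j" unfolding i_def using permutes_inverses(1)[OF assms(2)] by simp
      have "i \<in> {..<n}" using permutes_in_image[OF permutes_inv[OF assms(2)]] jn unfolding i_def by simp
      hence "i \<in> K (mg_src G e)" using assms(1,3) j ij unfolding inv_fam_def by auto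
      thus "j \<in> \<sigma> e ` K (mg_src G e)" using ij by auto
    qed
  qed
  thus ?thesis using inj by (simp add: bij_betw_def)
qed

lemma harm_sum:
  assumes sm: "simple_model G" and ss: "\<forall>v\<in>mg_verts G. star_sec G n v (\<phi> v)"
    and K: "\<forall>v\<in>mg_verts G. K v \<subseteq> {..<n}"
  shows "(\<Sum>e\<in>mg_edges G. (\<Sum>i\<in>K (mg_src G e). snd (snd (\<phi> (mg_src G e))) i e)
            + (\<Sum>j\<in>K (mg_tgt G e). snd (snd (\<phi> (mg_tgt G e))) j e)) = 0"
proof -
  let ?V = "mg_verts G" and ?E = "mg_edges G"
  let ?R = "\<lambda>v i e. snd (snd (\<phi> v)) i e"
  note f = sm_facts[OF sm]
  have fK: "\<And>v. v \<in> ?V \<Longrightarrow> finite (K v)" using K finite_subset by blast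
  have 1: "(\<Sum>e\<in>?E. \<Sum>i\<in>K (mg_src G e). ?R (mg_src G e) i e)
     = (\<Sum>v\<in>?V. \<Sum>e\<in>{e\<in>?E. mg_src G e = v}. \<Sum>i\<in>K v. ?R v i e)"
  proof -
    have "(\<Sum>v\<in>?V. \<Sum>e\<in>{e\<in>?E. mg_src G e = v}. \<Sum>i\<in>K v. ?R v i e)
       = (\<Sum>v\<in>?V. \<Sum>e\<in>{e\<in>?E. mg_src G e = v}. \<Sum>i\<in>K (mg_src G e). ?R (mg_src G e) i e)"
      by (intro sum.cong refl) auto
    also have "\<dots> = (\<Sum>e\<in>?E. \<Sum>i\<in>K (mg_src G e). ?R (mg_src G e) i e)"
      by (rule sum.group) (use f in auto)
    finally show ?thesis by simp
  qed
  have 2: "(\<Sum>e\<in>?E. \<Sum>i\<in>K (mg_tgt G e). ?R (mg_tgt G e) i e)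
     = (\<Sum>v\<in>?V. \<Sum>e\<in>{e\<in>?E. mg_tgt G e = v}. \<Sum>i\<in>K v. ?R v i e)"
  proof -
    have "(\<Sum>v\<in>?V. \<Sum>e\<in>{e\<in>?E. mg_tgt G e = v}. \<Sum>i\<in>K v. ?R v i e)
       = (\<Sum>v\<in>?V. \<Sum>e\<in>{e\<in>?E. mg_tgt G e = v}. \<Sum>i\<in>K (mg_tgt G e). ?R (mg_tgt G e) i e)"
      by (intro sum.cong refl) auto
    also have "\<dots> = (\<Sum>e\<in>?E. \<Sum>i\<in>K (mg_tgt G e). ?R (mg_tgt G e) i e)"
      by (rule sum.group) (use f in auto)
    finally show ?thesis by simp
  qed
  have 3: "\<And>v. v \<in> ?V \<Longrightarrow> (\<Sum>e\<in>{e\<in>?E. mg_src G e = v}. \<Sum>i\<in>K v. ?R v i e)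
      + (\<Sum>e\<in>{e\<in>?E. mg_tgt G e = v}. \<Sum>i\<in>K v. ?R v i e) = 0"
  proof -
    fix v assume v: "v \<in> ?V"
    have "(\<Sum>e\<in>{e\<in>?E. mg_src G e = v}. \<Sum>i\<in>K v. ?R v i e)
      + (\<Sum>e\<in>{e\<in>?E. mg_tgt G e = v}. \<Sum>i\<in>K v. ?R v i e)
      = (\<Sum>e\<in>{e\<in>?E. mg_src G e = v} \<union> {e\<in>?E. mg_tgt G e = v}. \<Sum>i\<in>K v. ?R v i e)"
      using f(2) f(5) by (intro sum.union_disjoint[symmetric]) fastforce+
    also have "{e\<in>?E. mg_src G e = v} \<union> {e\<in>?E. mg_tgt G e = v} = {e\<in>?E. mg_src G e = v \<or> mg_tgt G e = v}"
      by auto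
    also have "(\<Sum>e\<in>{e\<in>?E. mg_src G e = v \<or> mg_tgt G e = v}. \<Sum>i\<in>K v. ?R v i e)
       = (\<Sum>i\<in>K v. \<Sum>e\<in>{e\<in>?E. mg_src G e = v \<or> mg_tgt G e = v}. ?R v i e)"
      by (rule sum.swap)
    also have "\<dots> = 0"
    proof (rule sum.neutral, rule ballI)
      fix i assume "i \<in> K v"
      hence "i < n" using K v by auto
      thus "(\<Sum>e\<in>{e\<in>?E. mg_src G e = v \<or> mg_tgt G e = v}. ?R v i e) = 0"
        using ss v unfolding star_sec_def by auto
    qed
    finally show "?thesis v" .
  qed
  have "(\<Sum>e\<in>?E. (\<Sum>i\<in>K (mg_src G e). ?R (mg_src G e) i e) + (\<Sum>j\<in>K (mg_tgt G e). ?R (mg_tgt G e) j e))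
     = (\<Sum>e\<in>?E. \<Sum>i\<in>K (mg_src G e). ?R (mg_src G e) i e) + (\<Sum>e\<in>?E. \<Sum>j\<in>K (mg_tgt G e). ?R (mg_tgt G e) j e)"
    by (rule sum.distrib)
  also have "\<dots> = (\<Sum>v\<in>?V. \<Sum>e\<in>{e\<in>?E. mg_src G e = v}. \<Sum>i\<in>K v. ?R v i e)
      + (\<Sum>v\<in>?V. \<Sum>e\<in>{e\<in>?E. mg_tgt G e = v}. \<Sum>i\<in>K v. ?R v i e)"
    by (simp only: 1 2)
  also have "\<dots> = (\<Sum>v\<in>?V. (\<Sum>e\<in>{e\<in>?E. mg_src G e = v}. \<Sum>i\<in>K v. ?R v i e)
      + (\<Sum>e\<in>{e\<in>?E. mg_tgt G e = v}. \<Sum>i\<in>K v. ?R v i e))"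
    by (rule sum.distrib[symmetric])
  also have "\<dots> = 0" using 3 by (intro sum.neutral) blast
  finally show ?thesis .
qed



lemma kdeg_iso:
  assumes sm: "simple_model G" and iso: "iso_data G n D D' \<phi>"
    and vb: "vbundle G n D" and K: "inv_fam G n (\<lambda>e. fst (D e)) K"
  shows "kdeg G D K = kdeg G D' (\<lambda>v. fst (\<phi> v) ` K v)"
proof -
  note f = sm_facts[OF sm]
  have ss: "\<forall>v\<in>mg_verts G. star_sec G n v (\<phi> v)" using iso unfolding iso_data_def by blast
  have KV: "\<forall>v\<in>mg_verts G. K v \<subseteq> {..<n}" using K unfolding inv_fam_def by blast
  have edge: "(\<Sum>i\<in>K (mg_src G e). snd (snd (D e)) i)
     = (\<Sum>k\<in>fst (\<phi> (mg_src G e)) ` K (mg_src G e). snd (snd (D' e)) k)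
       + ((\<Sum>i\<in>K (mg_src G e). snd (snd (\<phi> (mg_src G e))) i e)
            + (\<Sum>j\<in>K (mg_tgt G e). snd (snd (\<phi> (mg_tgt G e))) j e))"
    if e: "e \<in> mg_edges G" for e
  proof -
    let ?s = "mg_src G e" and ?t = "mg_tgt G e"
    have sv: "?s \<in> mg_verts G" and tv: "?t \<in> mg_verts G" using f e by auto
    have perm: "fst (D e) permutes {..<n}" using vb e unfolding vbundle_def by auto
    have tperm: "fst (\<phi> ?s) permutes {..<n}" using ss sv unfolding star_sec_def by auto
    have sl: "\<And>i. i \<in> K ?s \<Longrightarrow> snd (snd (D e)) i = snd (snd (D' e)) (fst (\<phi> ?s) i)
       + snd (snd (\<phi> ?s)) i e + snd (snd (\<phi> ?t)) (fst (D e) i) e"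
    proof -
      fix i assume "i \<in> K ?s"
      hence "i < n" using KV sv by auto
      thus "?thesis i" using iso e unfolding iso_data_def by fastforce
    qed
    have "(\<Sum>i\<in>K ?s. snd (snd (D e)) i) = (\<Sum>i\<in>K ?s. snd (snd (D' e)) (fst (\<phi> ?s) i))
       + (\<Sum>i\<in>K ?s. snd (snd (\<phi> ?s)) i e) + (\<Sum>i\<in>K ?s. snd (snd (\<phi> ?t)) (fst (D e) i) e)"
      using sl by (simp add: sum.distrib)
    also have "(\<Sum>i\<in>K ?s. snd (snd (\<phi> ?t)) (fst (D e) i) e) = (\<Sum>j\<in>K ?t. snd (snd (\<phi> ?t)) j e)"
      by (rule sum.reindex_bij_betw) (rule inv_fam_bij[OF K perm e sv tv])
    also have "(\<Sum>i\<in>K ?s. snd (snd (D' e)) (fst (\<phi> ?s) i)) = (\<Sum>k\<in>fst (\<phi> ?s) ` K ?s. snd (snd (D' e)) k)"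
      using sum.reindex[OF permutes_inj_on[OF tperm], of "snd (snd (D' e))" "K ?s"] by simp
    finally show ?thesis by simp
  qed
  have "kdeg G D K = (\<Sum>e\<in>mg_edges G. (\<Sum>k\<in>fst (\<phi> (mg_src G e)) ` K (mg_src G e). snd (snd (D' e)) k)
       + ((\<Sum>i\<in>K (mg_src G e). snd (snd (\<phi> (mg_src G e))) i e)
            + (\<Sum>j\<in>K (mg_tgt G e). snd (snd (\<phi> (mg_tgt G e))) j e)))"
    unfolding kdeg_def using edge by (intro sum.cong) auto
  also have "\<dots> = kdeg G D' (\<lambda>v. fst (\<phi> v) ` K v)"
    unfolding sum.distrib kdeg_def using harm_sum[OF sm ss KV, unfolded sum.distrib] by simp
  finally show ?thesis .
qed

lemma degree_kdeg: "degree G n D = kdeg G D (\<lambda>v. {..<n})"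
  unfolding degree_def kdeg_def by simp

lemma kdeg_E_of: "kdeg G (E_of L) K = 0"
  unfolding kdeg_def E_of_def by simp



lemma is_walk_append:
  "is_walk G u w1 x \<Longrightarrow> is_walk G x w2 v \<Longrightarrow> is_walk G u (w1 @ w2) v"
proof (induction w1 arbitrary: u)
  case Nil thus ?case by simp
next
  case (Cons a w1)
  obtain e b where a: "a = (e, b)" by (cases a)
  show ?case using Cons unfolding a by (cases b) auto
qed

lemma transport_append:
  "transport \<sigma> (w1 @ w2) i = transport \<sigma> w2 (transport \<sigma> w1 i)"
proof (induction w1 arbitrary: i)
  case Nil thus ?case by simp
next
  case (Cons a w1)
  obtain e b where a: "a = (e, b)" by (cases a)
  show ?case using Cons unfolding a by (cases b) auto
qed

lemma walk_single_T: "e \<in> mg_edges G \<Longrightarrow> is_walk G (mg_src G e) [(e, True)] (mg_tgt G e)"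
  by simp
lemma walk_single_F: "e \<in> mg_edges G \<Longrightarrow> is_walk G (mg_tgt G e) [(e, False)] (mg_src G e)"
  by simp

lemma transport_lt:
  assumes perms: "\<forall>e\<in>mg_edges G. \<sigma> e permutes {..<n}"
  shows "is_walk G u w v \<Longrightarrow> i < n \<Longrightarrow> transport \<sigma> w i < n"
proof (induction w arbitrary: u i)
  case Nil thus ?case by simp
next
  case (Cons a w)
  obtain e b where a: "a = (e, b)" by (cases a)
  show ?case
  proof (cases b)
    case True
    hence e: "e \<in> mg_edges G" "is_walk G (mg_tgt G e) w v" using Cons.prems a by auto
    have "\<sigma> e i < n" using permutes_in_image[OF perms[rule_format, OF e(1)]] Cons.prems by simp
    thus ?thesis using Cons.IH[OF e(2)] a True by simp
  next
    case False
    hence e: "e \<in> mg_edges G" "is_walk G (mg_src G e) w v" using Cons.prems a by auto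
    have "inv (\<sigma> e) i < n" using permutes_in_image[OF permutes_inv[OF perms[rule_format, OF e(1)]]] Cons.prems by simp
    thus ?thesis using Cons.IH[OF e(2)] a False by simp
  qed
qed

lemma walk_verts:
  assumes sm: "simple_model G"
  shows "is_walk G u w v \<Longrightarrow> u \<in> mg_verts G \<Longrightarrow> v \<in> mg_verts G"
proof (induction w arbitrary: u)
  case Nil thus ?case by simp
next
  case (Cons a w)
  obtain e b where a: "a = (e, b)" by (cases a)
  show ?case using Cons sm_facts[OF sm] unfolding a by (cases b) auto
qed

lemma walk_inv_fam:
  assumes K: "inv_fam G n \<sigma> K" and perms: "\<forall>e\<in>mg_edges G. \<sigma> e permutes {..<n}"
  shows "is_walk G u w v \<Longrightarrow> i < n \<Longrightarrow> i \<in> K u \<Longrightarrow> transport \<sigma> w i \<in> K v"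
proof (induction w arbitrary: u i)
  case Nil thus ?case by simp
next
  case (Cons a w)
  obtain e b where a: "a = (e, b)" by (cases a)
  show ?case
  proof (cases b)
    case True
    hence e: "e \<in> mg_edges G" "is_walk G (mg_tgt G e) w v" "mg_src G e = u" using Cons.prems a by auto
    have "\<sigma> e i < n" using permutes_in_image[OF perms[rule_format, OF e(1)]] Cons.prems by simp
    moreover have "\<sigma> e i \<in> K (mg_tgt G e)" using K e Cons.prems unfolding inv_fam_def by auto
    ultimately show ?thesis using Cons.IH[OF e(2)] a True by simp
  next
    case False
    hence e: "e \<in> mg_edges G" "is_walk G (mg_src G e) w v" "mg_tgt G e = u" using Cons.prems a by auto
    have lt: "inv (\<sigma> e) i < n" using permutes_in_image[OF permutes_inv[OF perms[rule_format, OF e(1)]]] Cons.prems by simp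
    moreover have "\<sigma> e (inv (\<sigma> e) i) = i" using permutes_inverses(1)[OF perms[rule_format, OF e(1)]] .
    hence "inv (\<sigma> e) i \<in> K (mg_src G e)" using K e Cons.prems lt unfolding inv_fam_def by metis
    ultimately show ?thesis using Cons.IH[OF e(2)] a False by simp
  qed
qed

lemma walk_card:
  assumes sm: "simple_model G" and K: "inv_fam G n \<sigma> K" and perms: "\<forall>e\<in>mg_edges G. \<sigma> e permutes {..<n}"
  shows "is_walk G u w v \<Longrightarrow> card (K u) = card (K v)"
proof (induction w arbitrary: u)
  case Nil thus ?case by simp
next
  case (Cons a w)
  obtain e b where a: "a = (e, b)" by (cases a)
  note f = sm_facts[OF sm]
  show ?case
  proof (cases b)
    case True
    hence e: "e \<in> mg_edges G" "is_walk G (mg_tgt G e) w v" "mg_src G e = u" using Cons.prems a by auto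
    have "card (K (mg_src G e)) = card (K (mg_tgt G e))"
      using bij_betw_same_card[OF inv_fam_bij[OF K perms[rule_format, OF e(1)] e(1)]] f e by auto
    thus ?thesis using Cons.IH[OF e(2)] e by simp
  next
    case False
    hence e: "e \<in> mg_edges G" "is_walk G (mg_src G e) w v" "mg_tgt G e = u" using Cons.prems a by auto
    have "card (K (mg_src G e)) = card (K (mg_tgt G e))"
      using bij_betw_same_card[OF inv_fam_bij[OF K perms[rule_format, OF e(1)] e(1)]] f e by auto
    thus ?thesis using Cons.IH[OF e(2)] e by simp
  qed
qed

definition revw :: "('e \<times> bool) list \<Rightarrow> ('e \<times> bool) list" where
  "revw w = rev (map (\<lambda>(e, b). (e, \<not> b)) w)"

lemma revw_walk:
  "is_walk G u w v \<Longrightarrow> is_walk G v (revw w) u"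
proof (induction w arbitrary: u)
  case Nil thus ?case by (simp add: revw_def)
next
  case (Cons a w)
  obtain e b where a: "a = (e, b)" by (cases a)
  show ?case
  proof (cases b)
    case True
    hence e: "e \<in> mg_edges G" "is_walk G (mg_tgt G e) w v" "mg_src G e = u" using Cons.prems a by auto
    have "revw (a # w) = revw w @ [(e, False)]" unfolding revw_def a using True by simp
    thus ?thesis using is_walk_append[OF Cons.IH[OF e(2)] walk_single_F[OF e(1)]] e by simp
  next
    case False
    hence e: "e \<in> mg_edges G" "is_walk G (mg_src G e) w v" "mg_tgt G e = u" using Cons.prems a by auto
    have "revw (a # w) = revw w @ [(e, True)]" unfolding revw_def a using False by simp
    thus ?thesis using is_walk_append[OF Cons.IH[OF e(2)] walk_single_T[OF e(1)]] e by simp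
  qed
qed

lemma revw_transport:
  assumes perms: "\<forall>e\<in>mg_edges G. \<sigma> e permutes {..<n}"
  shows "is_walk G u w v \<Longrightarrow> transport \<sigma> (revw w) (transport \<sigma> w i) = i"
proof (induction w arbitrary: u i)
  case Nil thus ?case by (simp add: revw_def)
next
  case (Cons a w)
  obtain e b where a: "a = (e, b)" by (cases a)
  show ?case
  proof (cases b)
    case True
    hence e: "e \<in> mg_edges G" "is_walk G (mg_tgt G e) w v" using Cons.prems a by auto
    have "revw (a # w) = revw w @ [(e, False)]" unfolding revw_def a using True by simp
    thus ?thesis using Cons.IH[OF e(2)] a True permutes_inverses(2)[OF perms[rule_format, OF e(1)]]
      by (simp add: transport_append)
  next
    case False
    hence e: "e \<in> mg_edges G" "is_walk G (mg_src G e) w v" using Cons.prems a by auto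
    have "revw (a # w) = revw w @ [(e, True)]" unfolding revw_def a using False by simp
    thus ?thesis using Cons.IH[OF e(2)] a False permutes_inverses(1)[OF perms[rule_format, OF e(1)]]
      by (simp add: transport_append)
  qed
qed

lemma perm_exists:
  assumes K: "K \<subseteq> {..<n}" and m: "card K = m"
  shows "\<exists>\<tau>. \<tau> permutes {..<n} \<and> \<tau> ` K = {..<m}"
proof -
  have fK: "finite K" using K finite_subset by blast
  have mn: "m \<le> n" using card_mono[OF _ K] m by simp
  obtain f where f: "bij_betw f K {..<m}" using finite_same_card_bij[OF fK, of "{..<m}"] m by auto
  have "card ({..<n} - K) = n - m" using card_Diff_subset[OF fK K] m by simp
  then obtain g where g: "bij_betw g ({..<n} - K) {m..<n}"
    using finite_same_card_bij[of "{..<n} - K" "{m..<n}"] by auto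
  define \<tau> where "\<tau> x = (if x \<in> K then f x else if x < n then g x else x)" for x
  have b1: "bij_betw \<tau> K {..<m}" using f by (rule bij_betw_cong[THEN iffD1, rotated]) (simp add: \<tau>_def)
  have b2: "bij_betw \<tau> ({..<n} - K) {m..<n}" using g by (rule bij_betw_cong[THEN iffD1, rotated]) (simp add: \<tau>_def)
  have "bij_betw \<tau> (K \<union> ({..<n} - K)) ({..<m} \<union> {m..<n})"
    by (rule bij_betw_combine[OF b1 b2]) auto
  moreover have "K \<union> ({..<n} - K) = {..<n}" using K by auto
  moreover have "{..<m} \<union> {m..<n} = {..<n}" using mn by auto
  ultimately have "bij_betw \<tau> {..<n} {..<n}" by simp
  moreover have "\<And>x. x \<notin> {..<n} \<Longrightarrow> \<tau> x = x" using K unfolding \<tau>_def by auto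
  ultimately have "\<tau> permutes {..<n}" by (rule bij_imp_permutes)
  moreover have "\<tau> ` K = {..<m}" using b1 by (simp add: bij_betw_def)
  ultimately show ?thesis by blast
qed



lemma conn_card:
  assumes cc: "compact_connected_metric_graph G" and vb: "vbundle G n D"
    and K: "inv_fam G n (\<lambda>e. fst (D e)) K" and v0: "v0 \<in> mg_verts G" and v: "v \<in> mg_verts G"
  shows "card (K v) = card (K v0)"
proof -
  have sm: "simple_model G" and con: "connected_mgraph G" using cc unfolding compact_connected_metric_graph_def by auto
  obtain w where "is_walk G v0 w v" using con v0 v unfolding connected_mgraph_def by blast
  from walk_card[OF sm K _ this] vb show ?thesis unfolding vbundle_def by simp
qed

lemma sub_from_fam:
  assumes cc: "compact_connected_metric_graph G" and vb: "vbundle G n D"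
    and K: "inv_fam G n (\<lambda>e. fst (D e)) K" and v0: "v0 \<in> mg_verts G" and m: "m = card (K v0)"
  shows "\<exists>F. subbundle G m F n D \<and> degree G m F = kdeg G D K"
proof -
  have sm: "simple_model G" using cc unfolding compact_connected_metric_graph_def by auto
  note f = sm_facts[OF sm]
  have KV: "\<And>v. v \<in> mg_verts G \<Longrightarrow> K v \<subseteq> {..<n}" using K unfolding inv_fam_def by auto
  have cardK: "\<And>v. v \<in> mg_verts G \<Longrightarrow> card (K v) = m" using conn_card[OF cc vb K v0] m by simp
  have perm: "\<And>e. e \<in> mg_edges G \<Longrightarrow> fst (D e) permutes {..<n}" using vb unfolding vbundle_def by auto
  define \<tau> where "\<tau> v = (if v \<in> mg_verts G then (SOME \<tau>. \<tau> permutes {..<n} \<and> \<tau> ` K v = {..<m}) else id)" for v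
  have tau: "\<And>v. v \<in> mg_verts G \<Longrightarrow> \<tau> v permutes {..<n} \<and> \<tau> v ` K v = {..<m}"
  proof -
    fix v assume v: "v \<in> mg_verts G"
    show "\<tau> v permutes {..<n} \<and> \<tau> v ` K v = {..<m}"
      unfolding \<tau>_def using v someI_ex[OF perm_exists[OF KV[OF v] cardK[OF v]]] by simp
  qed
  have mn: "m \<le> n" using card_mono[OF _ KV[OF v0]] m by simp
  define D'' where "D'' e = ((\<lambda>i. \<tau> (mg_tgt G e) (fst (D e) (inv (\<tau> (mg_src G e)) i))),
      (\<lambda>i. fst (snd (D e)) (inv (\<tau> (mg_src G e)) i)), (\<lambda>i. snd (snd (D e)) (inv (\<tau> (mg_src G e)) i)))" for e
  define \<phi> :: "'a \<Rightarrow> 'b ssec" where "\<phi> v = (\<tau> v, \<lambda>_. 0, \<lambda>_ _. 0)" for v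
  have invtau: "\<And>v i. v \<in> mg_verts G \<Longrightarrow> inv (\<tau> v) (\<tau> v i) = i"
    by (rule permutes_inverses(2)[OF tau[THEN conjunct1]])
  have vb'': "vbundle G n D''"
    unfolding vbundle_def
  proof
    fix e assume e: "e \<in> mg_edges G"
    have p1: "\<tau> (mg_tgt G e) permutes {..<n}" using tau[OF f(4)[OF e]] by simp
    have p3: "inv (\<tau> (mg_src G e)) permutes {..<n}" using permutes_inv[OF tau[OF f(3)[OF e], THEN conjunct1]] .
    have "\<tau> (mg_tgt G e) \<circ> (fst (D e) \<circ> inv (\<tau> (mg_src G e))) permutes {..<n}"
      by (rule permutes_compose[OF permutes_compose[OF p3 perm[OF e]] p1])
    thus "fst (D'' e) permutes {..<n}" unfolding D''_def by (simp add: o_def)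
  qed
  have iso: "iso_data G n D D'' \<phi>"
    unfolding iso_data_def
  proof (intro conjI ballI allI impI)
    fix v assume "v \<in> mg_verts G"
    thus "star_sec G n v (\<phi> v)" unfolding star_sec_def \<phi>_def using tau by simp
  next
    fix e i assume e: "e \<in> mg_edges G" and i: "i < n"
    have s: "mg_src G e \<in> mg_verts G" using f e by auto
    show "fst (D'' e) (fst (\<phi> (mg_src G e)) i) = fst (\<phi> (mg_tgt G e)) (fst (D e) i)"
      "snd (snd (\<phi> (mg_src G e))) i e + snd (snd (D'' e)) (fst (\<phi> (mg_src G e)) i)
        = snd (snd (D e)) i - snd (snd (\<phi> (mg_tgt G e))) (fst (D e) i) e"
      "fst (snd (\<phi> (mg_src G e))) i + fst (snd (D'' e)) (fst (\<phi> (mg_src G e)) i)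
        = fst (snd (D e)) i + fst (snd (\<phi> (mg_tgt G e))) (fst (D e) i)
          + real_of_int (snd (snd (\<phi> (mg_tgt G e))) (fst (D e) i) e) * mg_len G e"
      unfolding D''_def \<phi>_def using invtau[OF s] by simp_all
  qed
  have biso: "bundle_iso G n D D''" using bundle_iso_iff[OF sm] vb vb'' iso by blast
  have memK: "\<And>v k. v \<in> mg_verts G \<Longrightarrow> k < n \<Longrightarrow> k \<in> K v \<longleftrightarrow> \<tau> v k < m"
  proof -
    fix v k assume v: "v \<in> mg_verts G" and k: "k < n"
    show "k \<in> K v \<longleftrightarrow> \<tau> v k < m"
    proof
      assume "k \<in> K v" thus "\<tau> v k < m" using tau[OF v] by auto
    next
      assume "\<tau> v k < m"
      hence "\<tau> v k \<in> \<tau> v ` K v" using tau[OF v] by simp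
      then obtain k' where k': "k' \<in> K v" "\<tau> v k = \<tau> v k'" by blast
      have "inj (\<tau> v)" using permutes_inj[OF tau[OF v, THEN conjunct1]] .
      hence "k = k'" using k'(2) by (rule injD)
      thus "k \<in> K v" using k'(1) by simp
    qed
  qed
  have sig'': "\<And>e i. e \<in> mg_edges G \<Longrightarrow> i < n \<Longrightarrow> (i < m \<longleftrightarrow> fst (D'' e) i < m)"
  proof -
    fix e i assume e: "e \<in> mg_edges G" and i: "i < n"
    have s: "mg_src G e \<in> mg_verts G" and t: "mg_tgt G e \<in> mg_verts G" using f e by auto
    define k where "k = inv (\<tau> (mg_src G e)) i"
    have kn: "k < n" unfolding k_def using permutes_in_image[OF permutes_inv[OF tau[OF s, THEN conjunct1]]] i by simp
    have tk: "\<tau> (mg_src G e) k = i" unfolding k_def using permutes_inverses(1)[OF tau[OF s, THEN conjunct1]] .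
    have skn: "fst (D e) k < n" using permutes_in_image[OF perm[OF e]] kn by simp
    have "i < m \<longleftrightarrow> k \<in> K (mg_src G e)" using memK[OF s kn] tk by simp
    also have "\<dots> \<longleftrightarrow> fst (D e) k \<in> K (mg_tgt G e)" using K e kn unfolding inv_fam_def by simp
    also have "\<dots> \<longleftrightarrow> \<tau> (mg_tgt G e) (fst (D e) k) < m" using memK[OF t skn] .
    finally show "i < m \<longleftrightarrow> fst (D'' e) i < m" unfolding D''_def k_def by simp
  qed
  have block: "\<forall>e\<in>mg_edges G. \<forall>i<n. m \<le> i \<longrightarrow> m \<le> fst (D'' e) i"
  proof (intro ballI allI impI)
    fix e i assume ei: "e \<in> mg_edges G" "i < n" and mi: "m \<le> i"
    have "\<not> i < m" using mi by simp
    hence "\<not> fst (D'' e) i < m" using sig''[OF ei] by blast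
    thus "m \<le> fst (D'' e) i" by simp
  qed
  define F where "F = restrict_td m D''"
  have vbF: "vbundle G m F"
    unfolding vbundle_def
  proof
    fix e assume e: "e \<in> mg_edges G"
    let ?p = "fst (F e)"
    have p: "?p = (\<lambda>i. if i < m then fst (D'' e) i else i)" unfolding F_def restrict_td_def by simp
    have sub: "?p ` {..<m} \<subseteq> {..<m}"
    proof
      fix y assume "y \<in> ?p ` {..<m}"
      then obtain x where x: "x < m" "y = ?p x" by auto
      have "x < n" using x mn by simp
      hence "fst (D'' e) x < m" using sig''[OF e] x by blast
      thus "y \<in> {..<m}" using x p by simp
    qed
    have inj: "inj_on ?p {..<m}"
    proof -
      have "fst (D'' e) permutes {..<n}" using vb'' e unfolding vbundle_def by blast
      hence "inj (fst (D'' e))" by (rule permutes_inj)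
      thus ?thesis unfolding p inj_on_def by (auto dest: injD)
    qed
    have "?p ` {..<m} = {..<m}" using endo_inj_surj[OF _ sub inj] by simp
    hence "bij_betw ?p {..<m} {..<m}" using inj by (simp add: bij_betw_def)
    moreover have "\<And>x. x \<notin> {..<m} \<Longrightarrow> ?p x = x" unfolding p by simp
    ultimately show "?p permutes {..<m}" by (rule bij_imp_permutes)
  qed
  have isoF: "bundle_iso G m F (restrict_td m D'')"
  proof -
    define \<psi> :: "'a \<Rightarrow> 'b ssec" where "\<psi> v = (id, \<lambda>_. 0, \<lambda>_ _. 0)" for v
    have "iso_data G m F F \<psi>" unfolding iso_data_def star_sec_def \<psi>_def by simp
    thus ?thesis using bundle_iso_iff[OF sm] vbF unfolding F_def by blast
  qed
  have sub: "subbundle G m F n D" unfolding subbundle_def using mn vbF biso block isoF by blast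
  have deg: "degree G m F = kdeg G D K"
    unfolding degree_def kdeg_def
  proof (rule sum.cong[OF refl])
    fix e assume e: "e \<in> mg_edges G"
    have s: "mg_src G e \<in> mg_verts G" using f e by auto
    have "(\<Sum>i<m. snd (snd (F e)) i) = (\<Sum>i\<in>\<tau> (mg_src G e) ` K (mg_src G e). snd (snd (D e)) (inv (\<tau> (mg_src G e)) i))"
      unfolding F_def restrict_td_def D''_def using tau[OF s] by simp
    also have "\<dots> = (\<Sum>k\<in>K (mg_src G e). snd (snd (D e)) (inv (\<tau> (mg_src G e)) (\<tau> (mg_src G e) k)))"
      using sum.reindex[OF permutes_inj_on[OF tau[OF s, THEN conjunct1]]] by (simp add: o_def)
    also have "\<dots> = (\<Sum>k\<in>K (mg_src G e). snd (snd (D e)) k)" using invtau[OF s] by simp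
    finally show "(\<Sum>i<m. snd (snd (F e)) i) = (\<Sum>k\<in>K (mg_src G e). snd (snd (D e)) k)" .
  qed
  show ?thesis using sub deg by blast
qed



lemma block_iff:
  fixes \<sigma> :: "nat \<Rightarrow> nat"
  assumes p: "\<sigma> permutes {..<n}" and b: "\<forall>i<n. m \<le> i \<longrightarrow> m \<le> \<sigma> i" and mn: "m \<le> n" and i: "i < n"
  shows "i < m \<longleftrightarrow> \<sigma> i < m"
proof
  assume im: "i < m"
  show "\<sigma> i < m"
  proof (rule ccontr)
    assume "\<not> \<sigma> i < m"
    hence si: "\<sigma> i \<in> {m..<n}" using permutes_in_image[OF p] i by (simp add: not_less)
    have sub: "\<sigma> ` {m..<n} \<subseteq> {m..<n}" using b permutes_in_image[OF p] by auto
    have "\<sigma> ` {m..<n} = {m..<n}" using endo_inj_surj[OF _ sub permutes_inj_on[OF p]] by simp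
    then obtain k where k: "k \<in> {m..<n}" "\<sigma> k = \<sigma> i" using si by (metis imageE)
    have "k = i" using injD[OF permutes_inj[OF p] k(2)] .
    thus False using k im by simp
  qed
next
  assume "\<sigma> i < m"
  thus "i < m" using b i by (meson not_le)
qed

lemma iso_fam:
  assumes sm: "simple_model G" and iso: "iso_data G n D D' \<phi>" and vb: "vbundle G n D"
    and blk: "\<forall>e\<in>mg_edges G. \<forall>i<n. i < m \<longleftrightarrow> fst (D' e) i < m" and mn: "m \<le> n"
  shows "inv_fam G n (\<lambda>e. fst (D e)) (\<lambda>v. {i. i < n \<and> fst (\<phi> v) i < m})"
    and "\<And>v. v \<in> mg_verts G \<Longrightarrow> fst (\<phi> v) ` {i. i < n \<and> fst (\<phi> v) i < m} = {..<m}"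
proof -
  have tau: "\<And>v. v \<in> mg_verts G \<Longrightarrow> fst (\<phi> v) permutes {..<n}"
    using iso unfolding iso_data_def star_sec_def by blast
  show "\<And>v. v \<in> mg_verts G \<Longrightarrow> fst (\<phi> v) ` {i. i < n \<and> fst (\<phi> v) i < m} = {..<m}"
  proof -
  fix v assume v: "v \<in> mg_verts G"
  show "fst (\<phi> v) ` {i. i < n \<and> fst (\<phi> v) i < m} = {..<m}"
  proof
    show "fst (\<phi> v) ` {i. i < n \<and> fst (\<phi> v) i < m} \<subseteq> {..<m}" by auto
  next
    show "{..<m} \<subseteq> fst (\<phi> v) ` {i. i < n \<and> fst (\<phi> v) i < m}"
    proof
      fix k assume k: "k \<in> {..<m}"
      define j where "j = inv (fst (\<phi> v)) k"
      have jk: "fst (\<phi> v) j = k" unfolding j_def using permutes_inverses(1)[OF tau[OF v]] .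
      have "j < n" unfolding j_def using permutes_in_image[OF permutes_inv[OF tau[OF v]]] k mn by simp
      thus "k \<in> fst (\<phi> v) ` {i. i < n \<and> fst (\<phi> v) i < m}" using jk k by force
    qed
  qed
  qed
next
  note f = sm_facts[OF sm]
  have tau: "\<And>v. v \<in> mg_verts G \<Longrightarrow> fst (\<phi> v) permutes {..<n}"
    using iso unfolding iso_data_def star_sec_def by blast
  show "inv_fam G n (\<lambda>e. fst (D e)) (\<lambda>v. {i. i < n \<and> fst (\<phi> v) i < m})"
    unfolding inv_fam_def
  proof (intro conjI ballI allI impI)
    fix e i assume e: "e \<in> mg_edges G" and i: "i < n"
    have ti: "fst (\<phi> (mg_src G e)) i < n" using permutes_in_image[OF tau[OF f(3)[OF e]]] i by simp
    have si: "fst (D e) i < n" using permutes_in_image[of "fst (D e)"] vb e i unfolding vbundle_def by auto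
    have eq: "fst (D' e) (fst (\<phi> (mg_src G e)) i) = fst (\<phi> (mg_tgt G e)) (fst (D e) i)"
      using iso e i unfolding iso_data_def by blast
    have "fst (\<phi> (mg_src G e)) i < m \<longleftrightarrow> fst (D' e) (fst (\<phi> (mg_src G e)) i) < m"
      using blk e ti by blast
    thus "i \<in> {i. i < n \<and> fst (\<phi> (mg_src G e)) i < m} \<longleftrightarrow>
          fst (D e) i \<in> {i. i < n \<and> fst (\<phi> (mg_tgt G e)) i < m}"
      using eq i si by simp
  qed auto
qed

lemma kdeg_cong:
  assumes sm: "simple_model G" and "\<And>v. v \<in> mg_verts G \<Longrightarrow> K v = K' v"
  shows "kdeg G D K = kdeg G D K'"
  unfolding kdeg_def using assms sm_facts[OF sm] by (intro sum.cong refl) auto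

lemma kdeg_restrict: "kdeg G (restrict_td m D) K = kdeg G D K"
  unfolding kdeg_def restrict_td_def by simp

lemma subbundle_data:
  assumes sm: "simple_model G" and sub: "subbundle G m F n D"
  shows "\<exists>D'' \<phi>. vbundle G n D'' \<and> iso_data G n D D'' \<phi> \<and> m \<le> n \<and> vbundle G m F \<and>
     (\<forall>e\<in>mg_edges G. \<forall>i<n. i < m \<longleftrightarrow> fst (D'' e) i < m) \<and>
     degree G m F = kdeg G D'' (\<lambda>v. {..<m})"
proof -
  obtain D'' where mn: "m \<le> n" and vbF: "vbundle G m F" and iso: "bundle_iso G n D D''"
    and blk: "\<forall>e\<in>mg_edges G. \<forall>i<n. m \<le> i \<longrightarrow> m \<le> fst (D'' e) i"
    and isoF: "bundle_iso G m F (restrict_td m D'')"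
    using sub unfolding subbundle_def by blast
  obtain \<phi> where vb'': "vbundle G n D''" and phi: "iso_data G n D D'' \<phi>"
    using iso bundle_iso_iff[OF sm] by blast
  have blk': "\<forall>e\<in>mg_edges G. \<forall>i<n. i < m \<longleftrightarrow> fst (D'' e) i < m"
  proof (intro ballI allI impI)
    fix e i assume e: "e \<in> mg_edges G" and "i < n"
    thus "i < m \<longleftrightarrow> fst (D'' e) i < m"
      using block_iff[of "fst (D'' e)" n m i] vb'' blk mn unfolding vbundle_def by blast
  qed
  obtain \<psi> where psi: "iso_data G m F (restrict_td m D'') \<psi>"
    using isoF bundle_iso_iff[OF sm] by blast
  have famF: "inv_fam G m (\<lambda>e. fst (F e)) (\<lambda>v. {..<m})"
    unfolding inv_fam_def using vbF permutes_in_image unfolding vbundle_def by fastforce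
  have "degree G m F = kdeg G F (\<lambda>v. {..<m})" by (rule degree_kdeg)
  also have "\<dots> = kdeg G (restrict_td m D'') (\<lambda>v. fst (\<psi> v) ` {..<m})"
    by (rule kdeg_iso[OF sm psi vbF famF])
  also have "\<dots> = kdeg G (restrict_td m D'') (\<lambda>v. {..<m})"
  proof (rule kdeg_cong[OF sm])
    fix v assume v: "v \<in> mg_verts G"
    have "fst (\<psi> v) permutes {..<m}" using psi v unfolding iso_data_def star_sec_def by blast
    thus "fst (\<psi> v) ` {..<m} = {..<m}" by (rule permutes_image)
  qed
  also have "\<dots> = kdeg G D'' (\<lambda>v. {..<m})" by (rule kdeg_restrict)
  finally show ?thesis using vb'' phi mn vbF blk' by blast
qed

lemma subbundle_deg0:
  assumes sm: "simple_model G" and vb: "vbundle G n D" and isoL: "bundle_iso G n D (E_of L)"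
    and sub: "subbundle G m F n D"
  shows "degree G m F = 0"
proof -
  obtain D'' \<phi> where vb'': "vbundle G n D''" and phi: "iso_data G n D D'' \<phi>" and mn: "m \<le> n"
    and blk: "\<forall>e\<in>mg_edges G. \<forall>i<n. i < m \<longleftrightarrow> fst (D'' e) i < m"
    and deg: "degree G m F = kdeg G D'' (\<lambda>v. {..<m})"
    using subbundle_data[OF sm sub] by blast
  let ?K = "\<lambda>v. {i. i < n \<and> fst (\<phi> v) i < m}"
  note fam = iso_fam[OF sm phi vb blk mn]
  obtain \<chi> where chi: "iso_data G n D (E_of L) \<chi>" using isoL bundle_iso_iff[OF sm] by blast
  have "kdeg G D ?K = kdeg G D'' (\<lambda>v. fst (\<phi> v) ` ?K v)" by (rule kdeg_iso[OF sm phi vb fam(1)])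
  also have "\<dots> = kdeg G D'' (\<lambda>v. {..<m})" by (rule kdeg_cong[OF sm fam(2)])
  finally have 1: "kdeg G D ?K = kdeg G D'' (\<lambda>v. {..<m})" .
  have "kdeg G D ?K = 0" using kdeg_iso[OF sm chi vb fam(1)] kdeg_E_of by simp
  thus ?thesis using 1 deg by simp
qed

lemma degree_E_of: "degree G n (E_of L) = 0"
  unfolding degree_def E_of_def by simp

lemma part1_fwd:
  assumes sm: "simple_model G" and vb: "vbundle G n D" and isoL: "bundle_iso G n D (E_of L)"
  shows "semistable G n D \<and> degree G n D = 0"
proof -
  obtain \<chi> where chi: "iso_data G n D (E_of L) \<chi>" using isoL bundle_iso_iff[OF sm] by blast
  have famN: "inv_fam G n (\<lambda>e. fst (D e)) (\<lambda>v. {..<n})"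
    unfolding inv_fam_def using vb permutes_in_image unfolding vbundle_def by fastforce
  have d0: "degree G n D = 0" using kdeg_iso[OF sm chi vb famN] kdeg_E_of degree_kdeg by metis
  have "semistable G n D" unfolding semistable_def slope_def
    using vb subbundle_deg0[OF sm vb isoL] d0 by simp
  thus ?thesis using d0 by simp
qed



lemma vb_E_of: "local_system G n L \<Longrightarrow> vbundle G n (E_of L)"
  unfolding local_system_def vbundle_def E_of_def by simp

lemma part_stable:
  assumes cc: "compact_connected_metric_graph G" and ls: "local_system G n L"
  shows "stable G n (E_of L) \<longleftrightarrow> indecomposable G n L"
proof -
  have sm: "simple_model G" and con: "connected_mgraph G" using cc unfolding compact_connected_metric_graph_def by auto
  note f = sm_facts[OF sm]
  let ?\<sigma> = "\<lambda>e. fst (L e)"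
  have vbL: "vbundle G n (E_of L)" using vb_E_of[OF ls] .
  have perms: "\<forall>e\<in>mg_edges G. ?\<sigma> e permutes {..<n}" using ls unfolding local_system_def by blast
  have sigE: "(\<lambda>e. fst (E_of L e)) = ?\<sigma>" unfolding E_of_def by simp
  obtain v0 where v0: "v0 \<in> mg_verts G" using sm unfolding simple_model_def by blast
  show ?thesis
  proof
    assume st: "stable G n (E_of L)"
    show "indecomposable G n L"
    proof (rule ccontr)
      assume "\<not> indecomposable G n L"
      then obtain u i j where u: "u \<in> mg_verts G" and i: "i < n" and j: "j < n"
        and nw: "\<And>w. is_walk G u w u \<Longrightarrow> transport ?\<sigma> w i \<noteq> j"
        unfolding indecomposable_def by blast
      define K where "K v = {k. k < n \<and> (\<exists>w. is_walk G u w v \<and> transport ?\<sigma> w i = k)}" for v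
      have fam: "inv_fam G n ?\<sigma> K"
        unfolding inv_fam_def
      proof (intro conjI ballI allI impI)
        fix v assume "v \<in> mg_verts G" thus "K v \<subseteq> {..<n}" unfolding K_def by auto
      next
        fix e k assume e: "e \<in> mg_edges G" and k: "k < n"
        have sk: "?\<sigma> e k < n" using permutes_in_image[OF perms[rule_format, OF e]] k by simp
        show "k \<in> K (mg_src G e) \<longleftrightarrow> ?\<sigma> e k \<in> K (mg_tgt G e)"
        proof
          assume "k \<in> K (mg_src G e)"
          then obtain w where w: "is_walk G u w (mg_src G e)" "transport ?\<sigma> w i = k" unfolding K_def by blast
          have "is_walk G u (w @ [(e, True)]) (mg_tgt G e)" using is_walk_append[OF w(1) walk_single_T[OF e]] .
          moreover have "transport ?\<sigma> (w @ [(e, True)]) i = ?\<sigma> e k" using w(2) by (simp add: transport_append)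
          ultimately show "?\<sigma> e k \<in> K (mg_tgt G e)" unfolding K_def using sk by blast
        next
          assume "?\<sigma> e k \<in> K (mg_tgt G e)"
          then obtain w where w: "is_walk G u w (mg_tgt G e)" "transport ?\<sigma> w i = ?\<sigma> e k" unfolding K_def by blast
          have "is_walk G u (w @ [(e, False)]) (mg_src G e)" using is_walk_append[OF w(1) walk_single_F[OF e]] .
          moreover have "transport ?\<sigma> (w @ [(e, False)]) i = k" using w(2)
            permutes_inverses(2)[OF perms[rule_format, OF e]] by (simp add: transport_append)
          ultimately show "k \<in> K (mg_src G e)" unfolding K_def using k by blast
        qed
      qed
      have famE: "inv_fam G n (\<lambda>e. fst (E_of L e)) K" using fam sigE by simp
      define m where "m = card (K u)"
      obtain F where sub: "subbundle G m F n (E_of L)" and deg: "degree G m F = kdeg G (E_of L) K"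
        using sub_from_fam[OF cc vbL famE u m_def] by blast
      have iK: "i \<in> K u" unfolding K_def using i by (auto intro: exI[of _ "[]"])
      have jK: "j \<notin> K u" unfolding K_def using nw by blast
      have sub1: "K u \<subseteq> {..<n}" using fam u unfolding inv_fam_def by blast
      have "K u \<subset> {..<n}" using sub1 jK j by auto
      hence mn: "m < n" unfolding m_def using psubset_card_mono[of "{..<n}" "K u"] by simp
      have m0: "0 < m" unfolding m_def using iK sub1 finite_subset[OF sub1] card_gt_0_iff by blast
      have "slope G m F < slope G n (E_of L)" using st sub mn m0 unfolding stable_def by blast
      moreover have "slope G m F = 0" unfolding slope_def using deg by (simp add: kdeg_E_of)
      moreover have "slope G n (E_of L) = 0" unfolding slope_def by (simp add: degree_E_of)
      ultimately show False by simp
    qed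
  next
    assume ind: "indecomposable G n L"
    have "\<not> subbundle G m F n (E_of L)" if m0: "0 < m" and mn: "m < n" for m F
    proof
      assume sub: "subbundle G m F n (E_of L)"
      obtain D'' \<phi> where vb'': "vbundle G n D''" and phi: "iso_data G n (E_of L) D'' \<phi>" and mn': "m \<le> n"
        and blk: "\<forall>e\<in>mg_edges G. \<forall>i<n. i < m \<longleftrightarrow> fst (D'' e) i < m"
        using subbundle_data[OF sm sub] by blast
      let ?K = "\<lambda>v. {i. i < n \<and> fst (\<phi> v) i < m}"
      have fam: "inv_fam G n ?\<sigma> ?K" using iso_fam(1)[OF sm phi vbL blk mn'] sigE by simp
      have tau: "fst (\<phi> v0) permutes {..<n}" using phi v0 unfolding iso_data_def star_sec_def by blast
      define i0 where "i0 = inv (fst (\<phi> v0)) 0"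
      define j0 where "j0 = inv (fst (\<phi> v0)) m"
      have i0: "i0 < n" "fst (\<phi> v0) i0 = 0" unfolding i0_def
        using permutes_in_image[OF permutes_inv[OF tau]] m0 mn permutes_inverses(1)[OF tau] by auto
      have j0: "j0 < n" "fst (\<phi> v0) j0 = m" unfolding j0_def
        using permutes_in_image[OF permutes_inv[OF tau]] mn permutes_inverses(1)[OF tau] by auto
      obtain w where w: "is_walk G v0 w v0" "transport ?\<sigma> w i0 = j0"
        using ind v0 i0(1) j0(1) unfolding indecomposable_def by blast
      have "transport ?\<sigma> w i0 \<in> ?K v0" using walk_inv_fam[OF fam perms w(1) i0(1)] i0 m0 by simp
      thus False using w(2) j0 by simp
    qed
    thus "stable G n (E_of L)" unfolding stable_def using vbL by blast
  qed
qed



lemma In_sum: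
  assumes fE: "finite (mg_edges G)" and perms: "\<forall>e\<in>mg_edges G. \<sigma> e permutes {..<n}" and j: "j < n"
  shows "(\<Sum>p\<in>{(e,i). e \<in> mg_edges G \<and> i < n \<and> mg_tgt G e = v \<and> \<sigma> e i = j}. g (fst p) (snd p))
       = (\<Sum>e\<in>{e\<in>mg_edges G. mg_tgt G e = v}. g e (inv (\<sigma> e) j))"
proof -
  let ?h = "\<lambda>e. (e, inv (\<sigma> e) j)"
  have "bij_betw ?h {e\<in>mg_edges G. mg_tgt G e = v} {(e,i). e \<in> mg_edges G \<and> i < n \<and> mg_tgt G e = v \<and> \<sigma> e i = j}"
    unfolding bij_betw_def
  proof
    show "inj_on ?h {e\<in>mg_edges G. mg_tgt G e = v}" by (auto simp: inj_on_def)
  next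
    show "?h ` {e\<in>mg_edges G. mg_tgt G e = v} = {(e,i). e \<in> mg_edges G \<and> i < n \<and> mg_tgt G e = v \<and> \<sigma> e i = j}"
    proof (intro set_eqI iffI)
      fix p assume "p \<in> ?h ` {e\<in>mg_edges G. mg_tgt G e = v}"
      then obtain e where e: "e \<in> mg_edges G" "mg_tgt G e = v" "p = ?h e" by blast
      have p: "\<sigma> e permutes {..<n}" using perms e by blast
      have "inv (\<sigma> e) j < n" using permutes_in_image[OF permutes_inv[OF p]] j by simp
      moreover have "\<sigma> e (inv (\<sigma> e) j) = j" using permutes_inverses(1)[OF p] .
      ultimately show "p \<in> {(e,i). e \<in> mg_edges G \<and> i < n \<and> mg_tgt G e = v \<and> \<sigma> e i = j}" using e by simp
    next
      fix p assume "p \<in> {(e,i). e \<in> mg_edges G \<and> i < n \<and> mg_tgt G e = v \<and> \<sigma> e i = j}"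
      then obtain e i where e: "p = (e, i)" "e \<in> mg_edges G" "i < n" "mg_tgt G e = v" "\<sigma> e i = j" by blast
      have p: "\<sigma> e permutes {..<n}" using perms e by blast
      have "inv (\<sigma> e) j = i" using permutes_inverses(2)[OF p, of i] e(5) by simp
      thus "p \<in> ?h ` {e\<in>mg_edges G. mg_tgt G e = v}" using e by force
    qed
  qed
  from sum.reindex_bij_betw[OF this, of "\<lambda>p. g (fst p) (snd p)"] show ?thesis by simp
qed

lemma inc_split:
  assumes sm: "simple_model G"
  shows "(\<Sum>e\<in>{e\<in>mg_edges G. mg_src G e = v \<or> mg_tgt G e = v}. g e)
    = (\<Sum>e\<in>{e\<in>mg_edges G. mg_src G e = v}. g e) + (\<Sum>e\<in>{e\<in>mg_edges G. mg_tgt G e = v}. g e)"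
proof -
  note f = sm_facts[OF sm]
  have "{e\<in>mg_edges G. mg_src G e = v \<or> mg_tgt G e = v} = {e\<in>mg_edges G. mg_src G e = v} \<union> {e\<in>mg_edges G. mg_tgt G e = v}"
    by auto
  moreover have "(\<Sum>e\<in>{e\<in>mg_edges G. mg_src G e = v} \<union> {e\<in>mg_edges G. mg_tgt G e = v}. g e)
    = (\<Sum>e\<in>{e\<in>mg_edges G. mg_src G e = v}. g e) + (\<Sum>e\<in>{e\<in>mg_edges G. mg_tgt G e = v}. g e)"
    using f(2) f(5) by (intro sum.union_disjoint) fastforce+
  ultimately show ?thesis by simp
qed

lemma part2:
  assumes sm: "simple_model G" and ls1: "local_system G n L1" and ls2: "local_system G n L2"
  shows "bundle_iso G n (E_of L1) (E_of L2) \<longleftrightarrow> (\<exists>\<pi>. cover_iso G n L1 L2 \<pi> \<and> same_jac_class G n L1 L2 \<pi>)"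
proof -
  note f = sm_facts[OF sm]
  let ?\<sigma> = "\<lambda>e. fst (L1 e)"
  have perms: "\<forall>e\<in>mg_edges G. ?\<sigma> e permutes {..<n}" using ls1 unfolding local_system_def by blast
  have vb1: "vbundle G n (E_of L1)" and vb2: "vbundle G n (E_of L2)" using vb_E_of ls1 ls2 by auto
  show ?thesis
  proof
    assume "bundle_iso G n (E_of L1) (E_of L2)"
    then obtain \<phi> where phi: "iso_data G n (E_of L1) (E_of L2) \<phi>" using bundle_iso_iff[OF sm] by blast
    have ss: "\<And>v. v \<in> mg_verts G \<Longrightarrow> star_sec G n v (\<phi> v)" using phi unfolding iso_data_def by blast
    have ed: "\<And>e i. e \<in> mg_edges G \<Longrightarrow> i < n \<Longrightarrow>
      fst (L2 e) (fst (\<phi> (mg_src G e)) i) = fst (\<phi> (mg_tgt G e)) (fst (L1 e) i) \<and>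
      snd (snd (\<phi> (mg_src G e))) i e = - snd (snd (\<phi> (mg_tgt G e))) (fst (L1 e) i) e \<and>
      fst (snd (\<phi> (mg_src G e))) i + snd (L2 e) (fst (\<phi> (mg_src G e)) i)
        = snd (L1 e) i + fst (snd (\<phi> (mg_tgt G e))) (fst (L1 e) i)
          + real_of_int (snd (snd (\<phi> (mg_tgt G e))) (fst (L1 e) i) e) * mg_len G e"
      using phi unfolding iso_data_def E_of_def by simp
    define \<pi> where "\<pi> v = fst (\<phi> v)" for v
    define a where "a v j = - fst (snd (\<phi> v)) j" for v j
    define \<omega> where "\<omega> e i = snd (snd (\<phi> (mg_src G e))) i e" for e i
    have ci: "cover_iso G n L1 L2 \<pi>"
      unfolding cover_iso_def \<pi>_def using ss ed unfolding star_sec_def by simp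
    have kir: "(\<Sum>e\<in>{e\<in>mg_edges G. mg_src G e = v}. \<omega> e j)
           = (\<Sum>p\<in>{(e,i). e \<in> mg_edges G \<and> i < n \<and> mg_tgt G e = v \<and> fst (L1 e) i = j}.
                 \<omega> (fst p) (snd p))" if v: "v \<in> mg_verts G" and j: "j < n" for v j
    proof -
      have "(\<Sum>p\<in>{(e,i). e \<in> mg_edges G \<and> i < n \<and> mg_tgt G e = v \<and> fst (L1 e) i = j}. \<omega> (fst p) (snd p))
          = (\<Sum>e\<in>{e\<in>mg_edges G. mg_tgt G e = v}. \<omega> e (inv (?\<sigma> e) j))"
        using In_sum[OF f(2) perms j, where v=v and g=\<omega>] by simp
      also have "\<dots> = (\<Sum>e\<in>{e\<in>mg_edges G. mg_tgt G e = v}. - snd (snd (\<phi> v)) j e)"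
      proof (rule sum.cong[OF refl])
        fix e assume e: "e \<in> {e\<in>mg_edges G. mg_tgt G e = v}"
        have p: "?\<sigma> e permutes {..<n}" using perms e by blast
        have il: "inv (?\<sigma> e) j < n" using permutes_in_image[OF permutes_inv[OF p]] j by simp
        have "?\<sigma> e (inv (?\<sigma> e) j) = j" using permutes_inverses(1)[OF p] .
        thus "\<omega> e (inv (?\<sigma> e) j) = - snd (snd (\<phi> v)) j e" unfolding \<omega>_def using ed[of e "inv (?\<sigma> e) j"] e il by simp
      qed
      also have "\<dots> = (\<Sum>e\<in>{e\<in>mg_edges G. mg_src G e = v}. \<omega> e j)"
      proof -
        have "(\<Sum>e\<in>{e\<in>mg_edges G. mg_src G e = v \<or> mg_tgt G e = v}. snd (snd (\<phi> v)) j e) = 0"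
          using ss[OF v] j unfolding star_sec_def by simp
        hence "(\<Sum>e\<in>{e\<in>mg_edges G. mg_src G e = v}. snd (snd (\<phi> v)) j e) + (\<Sum>e\<in>{e\<in>mg_edges G. mg_tgt G e = v}. snd (snd (\<phi> v)) j e) = 0"
          using inc_split[OF sm, where v=v and g="\<lambda>e. snd (snd (\<phi> v)) j e"] by simp
        moreover have "(\<Sum>e\<in>{e\<in>mg_edges G. mg_src G e = v}. \<omega> e j) = (\<Sum>e\<in>{e\<in>mg_edges G. mg_src G e = v}. snd (snd (\<phi> v)) j e)"
          unfolding \<omega>_def by (intro sum.cong refl) auto
        ultimately show ?thesis by (simp add: sum_negf)
      qed
      finally show ?thesis by simp
    qed
    have jac: "snd (L1 e) i - snd (L2 e) (\<pi> (mg_src G e) i)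
           = a (mg_tgt G e) (fst (L1 e) i) - a (mg_src G e) i
             + mg_len G e * real_of_int (\<omega> e i)" if e: "e \<in> mg_edges G" and i: "i < n" for e i
    proof -
      have 1: "real_of_int (snd (snd (\<phi> (mg_tgt G e))) (fst (L1 e) i) e) = - real_of_int (\<omega> e i)"
        unfolding \<omega>_def using ed[OF e i] by simp
      show ?thesis unfolding a_def \<pi>_def using ed[OF e i] 1 by (simp add: algebra_simps)
    qed
    have "same_jac_class G n L1 L2 \<pi>" unfolding same_jac_class_def using kir jac by blast
    thus "\<exists>\<pi>. cover_iso G n L1 L2 \<pi> \<and> same_jac_class G n L1 L2 \<pi>" using ci by blast
  next
    assume "\<exists>\<pi>. cover_iso G n L1 L2 \<pi> \<and> same_jac_class G n L1 L2 \<pi>"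
    then obtain \<pi> a \<omega> where ci: "cover_iso G n L1 L2 \<pi>"
      and kir: "\<And>v j. v \<in> mg_verts G \<Longrightarrow> j < n \<Longrightarrow> (\<Sum>e\<in>{e\<in>mg_edges G. mg_src G e = v}. \<omega> e j)
           = (\<Sum>p\<in>{(e,i). e \<in> mg_edges G \<and> i < n \<and> mg_tgt G e = v \<and> fst (L1 e) i = j}.
                 \<omega> (fst p) (snd p))"
      and jac: "\<And>e i. e \<in> mg_edges G \<Longrightarrow> i < n \<Longrightarrow> snd (L1 e) i - snd (L2 e) (\<pi> (mg_src G e) i)
           = a (mg_tgt G e) (fst (L1 e) i) - a (mg_src G e) i
             + mg_len G e * real_of_int (\<omega> e i)"
      unfolding same_jac_class_def by blast
    define \<phi> :: "'a \<Rightarrow> 'b ssec" where "\<phi> v = (\<pi> v, \<lambda>j. - a v j,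
        \<lambda>j e. if mg_src G e = v then \<omega> e j else - \<omega> e (inv (?\<sigma> e) j))" for v
    have "iso_data G n (E_of L1) (E_of L2) \<phi>"
      unfolding iso_data_def
    proof (intro conjI ballI allI impI)
      fix v assume v: "v \<in> mg_verts G"
      show "star_sec G n v (\<phi> v)" unfolding star_sec_def
      proof (intro conjI allI impI)
        show "fst (\<phi> v) permutes {..<n}" using ci v unfolding cover_iso_def \<phi>_def by simp
      next
        fix j assume j: "j < n"
        have "(\<Sum>e\<in>{e\<in>mg_edges G. mg_src G e = v \<or> mg_tgt G e = v}. snd (snd (\<phi> v)) j e)
          = (\<Sum>e\<in>{e\<in>mg_edges G. mg_src G e = v}. snd (snd (\<phi> v)) j e) + (\<Sum>e\<in>{e\<in>mg_edges G. mg_tgt G e = v}. snd (snd (\<phi> v)) j e)"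
          by (rule inc_split[OF sm])
        also have "(\<Sum>e\<in>{e\<in>mg_edges G. mg_src G e = v}. snd (snd (\<phi> v)) j e) = (\<Sum>e\<in>{e\<in>mg_edges G. mg_src G e = v}. \<omega> e j)"
          unfolding \<phi>_def by (intro sum.cong refl) auto
        also have "(\<Sum>e\<in>{e\<in>mg_edges G. mg_tgt G e = v}. snd (snd (\<phi> v)) j e) = (\<Sum>e\<in>{e\<in>mg_edges G. mg_tgt G e = v}. - \<omega> e (inv (?\<sigma> e) j))"
          unfolding \<phi>_def using f(5) by (intro sum.cong refl) auto
        also have "\<dots> = - (\<Sum>p\<in>{(e,i). e \<in> mg_edges G \<and> i < n \<and> mg_tgt G e = v \<and> fst (L1 e) i = j}. \<omega> (fst p) (snd p))"
          using In_sum[OF f(2) perms j, where v=v and g=\<omega>] by (simp add: sum_negf)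
        finally show "(\<Sum>e\<in>{e\<in>mg_edges G. mg_src G e = v \<or> mg_tgt G e = v}. snd (snd (\<phi> v)) j e) = 0"
          using kir[OF v j] by simp
      qed
    next
      fix e i assume e: "e \<in> mg_edges G" and i: "i < n"
      have ne: "mg_src G e \<noteq> mg_tgt G e" using f(5)[OF e] .
      have p: "?\<sigma> e permutes {..<n}" using perms e by blast
      have inv1: "inv (?\<sigma> e) (?\<sigma> e i) = i" using permutes_inverses(2)[OF p] .
      show "fst (E_of L2 e) (fst (\<phi> (mg_src G e)) i) = fst (\<phi> (mg_tgt G e)) (fst (E_of L1 e) i)"
        using ci e i unfolding cover_iso_def \<phi>_def E_of_def by simp
      show "snd (snd (\<phi> (mg_src G e))) i e + snd (snd (E_of L2 e)) (fst (\<phi> (mg_src G e)) i)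
        = snd (snd (E_of L1 e)) i - snd (snd (\<phi> (mg_tgt G e))) (fst (E_of L1 e) i) e"
        unfolding \<phi>_def E_of_def using ne inv1 by simp
      show "fst (snd (\<phi> (mg_src G e))) i + fst (snd (E_of L2 e)) (fst (\<phi> (mg_src G e)) i)
        = fst (snd (E_of L1 e)) i + fst (snd (\<phi> (mg_tgt G e))) (fst (E_of L1 e) i)
          + real_of_int (snd (snd (\<phi> (mg_tgt G e))) (fst (E_of L1 e) i) e) * mg_len G e"
        unfolding \<phi>_def E_of_def using ne inv1 jac[OF e i] by (simp add: algebra_simps)
    qed
    thus "bundle_iso G n (E_of L1) (E_of L2)" using bundle_iso_iff[OF sm] vb1 vb2 by blast
  qed
qed



lemma kdeg_le0:
  assumes cc: "compact_connected_metric_graph G" and ss: "semistable G n D" and d0: "degree G n D = 0"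
    and K: "inv_fam G n (\<lambda>e. fst (D e)) K"
  shows "kdeg G D K \<le> 0"
proof -
  have sm: "simple_model G" using cc unfolding compact_connected_metric_graph_def by auto
  note f = sm_facts[OF sm]
  have vb: "vbundle G n D" using ss unfolding semistable_def by blast
  obtain v0 where v0: "v0 \<in> mg_verts G" using sm unfolding simple_model_def by blast
  define m where "m = card (K v0)"
  have KV: "\<And>v. v \<in> mg_verts G \<Longrightarrow> K v \<subseteq> {..<n}" using K unfolding inv_fam_def by blast
  show ?thesis
  proof (cases "m = 0")
    case True
    have "\<And>v. v \<in> mg_verts G \<Longrightarrow> K v = {}"
    proof -
      fix v assume v: "v \<in> mg_verts G"
      have "card (K v) = 0" using conn_card[OF cc vb K v0 v] True m_def by simp
      moreover have "finite (K v)" using KV[OF v] finite_subset by blast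
      ultimately show "K v = {}" by simp
    qed
    hence "kdeg G D K = kdeg G D (\<lambda>v. {})" by (rule kdeg_cong[OF sm])
    thus ?thesis unfolding kdeg_def by simp
  next
    case False
    obtain F where sub: "subbundle G m F n D" and deg: "degree G m F = kdeg G D K"
      using sub_from_fam[OF cc vb K v0 m_def] by blast
    have "slope G m F \<le> slope G n D" using ss sub False unfolding semistable_def by simp
    hence "real_of_int (degree G m F) / real m \<le> 0" unfolding slope_def using d0 by simp
    hence "real_of_int (degree G m F) \<le> 0" using False by (simp add: divide_le_0_iff)
    thus ?thesis using deg by simp
  qed
qed

lemma kdeg_zero:
  assumes cc: "compact_connected_metric_graph G" and ss: "semistable G n D" and d0: "degree G n D = 0"
    and K: "inv_fam G n (\<lambda>e. fst (D e)) K"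
  shows "kdeg G D K = 0"
proof -
  have sm: "simple_model G" using cc unfolding compact_connected_metric_graph_def by auto
  note f = sm_facts[OF sm]
  let ?Kc = "\<lambda>v. {..<n} - K v"
  have Kc: "inv_fam G n (\<lambda>e. fst (D e)) ?Kc"
    using K unfolding inv_fam_def
  proof (intro conjI ballI allI impI)
    fix e i assume e: "e \<in> mg_edges G" and i: "i < n"
    have vb: "vbundle G n D" using ss unfolding semistable_def by blast
    have "fst (D e) i < n" using permutes_in_image[of "fst (D e)" "{..<n}" i] vb e i unfolding vbundle_def by auto
    thus "i \<in> ?Kc (mg_src G e) \<longleftrightarrow> fst (D e) i \<in> ?Kc (mg_tgt G e)" using K e i unfolding inv_fam_def by simp
  qed auto
  have "kdeg G D K + kdeg G D ?Kc = kdeg G D (\<lambda>v. {..<n})"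
    unfolding kdeg_def sum.distrib[symmetric]
  proof (rule sum.cong[OF refl])
    fix e assume e: "e \<in> mg_edges G"
    have sub: "K (mg_src G e) \<subseteq> {..<n}" using K f e unfolding inv_fam_def by blast
    show "(\<Sum>i\<in>K (mg_src G e). snd (snd (D e)) i) + (\<Sum>i\<in>{..<n} - K (mg_src G e). snd (snd (D e)) i)
        = (\<Sum>i\<in>{..<n}. snd (snd (D e)) i)"
      using sum.subset_diff[OF sub, of "snd (snd (D e))"] by simp
  qed
  hence "kdeg G D K + kdeg G D ?Kc = 0" using d0 degree_kdeg by metis
  moreover have "kdeg G D K \<le> 0" by (rule kdeg_le0[OF cc ss d0 K])
  moreover have "kdeg G D ?Kc \<le> 0" by (rule kdeg_le0[OF cc ss d0 Kc])
  ultimately show ?thesis by simp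
qed



definition divg :: "('v,'e) mgraph \<Rightarrow> ('e \<Rightarrow> nat \<Rightarrow> nat) \<Rightarrow> ('e \<Rightarrow> nat \<Rightarrow> int) \<Rightarrow> 'v \<Rightarrow> nat \<Rightarrow> int" where
  "divg G \<sigma> x q k = (\<Sum>e\<in>{e\<in>mg_edges G. mg_src G e = q}. x e k) - (\<Sum>e\<in>{e\<in>mg_edges G. mg_tgt G e = q}. x e (inv (\<sigma> e) k))"

fun wflow :: "('e \<Rightarrow> nat \<Rightarrow> nat) \<Rightarrow> ('e \<times> bool) list \<Rightarrow> nat \<Rightarrow> 'e \<Rightarrow> nat \<Rightarrow> int" where
  "wflow \<sigma> [] i = (\<lambda>e k. 0)"
| "wflow \<sigma> ((ee, True) # w) i = (\<lambda>e k. (if e = ee \<and> k = i then 1 else 0) + wflow \<sigma> w (\<sigma> ee i) e k)"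
| "wflow \<sigma> ((ee, False) # w) i = (\<lambda>e k. - (if e = ee \<and> k = inv (\<sigma> ee) i then 1 else 0) + wflow \<sigma> w (inv (\<sigma> ee) i) e k)"

lemma divg_add: "divg G \<sigma> (\<lambda>e k. x e k + y e k) q k = divg G \<sigma> x q k + divg G \<sigma> y q k"
  unfolding divg_def by (simp add: sum.distrib)

lemma divg_neg_add: "divg G \<sigma> (\<lambda>e k. - x e k + y e k) q k = - divg G \<sigma> x q k + divg G \<sigma> y q k"
  unfolding divg_def by (simp add: sum_subtractf algebra_simps)

lemma divg_zero: "divg G \<sigma> (\<lambda>e k. 0) q k = 0"
  unfolding divg_def by simp

lemma divg_sum:
  "divg G \<sigma> (\<lambda>e k. \<Sum>p\<in>P. c p * F p e k) q k = (\<Sum>p\<in>P. c p * divg G \<sigma> (F p) q k)"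
  unfolding divg_def
  by (simp add: sum_subtractf[symmetric] sum_distrib_left right_diff_distrib sum.swap[of _ P])

lemma sum_delta_conj:
  assumes "finite S"
  shows "(\<Sum>e\<in>S. if e = ee \<and> P then (1::int) else 0) = (if ee \<in> S \<and> P then 1 else 0)"
  using assms by (cases P) (simp_all add: sum.delta)

lemma divg_delta:
  assumes fE: "finite (mg_edges G)" and ee: "ee \<in> mg_edges G" and p: "\<sigma> ee permutes {..<n}"
  shows "divg G \<sigma> (\<lambda>e k. if e = ee \<and> k = ii then 1 else 0) q k
     = (if mg_src G ee = q \<and> k = ii then 1 else 0) - (if mg_tgt G ee = q \<and> k = \<sigma> ee ii then 1 else 0)"
proof -
  have fs: "finite {e\<in>mg_edges G. mg_src G e = q}" "finite {e\<in>mg_edges G. mg_tgt G e = q}" using fE by auto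
  have 1: "(\<Sum>e\<in>{e\<in>mg_edges G. mg_src G e = q}. if e = ee \<and> k = ii then (1::int) else 0)
      = (if mg_src G ee = q \<and> k = ii then 1 else 0)"
    using sum_delta_conj[OF fs(1), of ee "k = ii"] ee by simp
  have iff: "inv (\<sigma> ee) k = ii \<longleftrightarrow> k = \<sigma> ee ii"
    using permutes_inverses[OF p] by metis
  have 2: "(\<Sum>e\<in>{e\<in>mg_edges G. mg_tgt G e = q}. if e = ee \<and> inv (\<sigma> e) k = ii then (1::int) else 0)
      = (\<Sum>e\<in>{e\<in>mg_edges G. mg_tgt G e = q}. if e = ee \<and> inv (\<sigma> ee) k = ii then (1::int) else 0)"
    by (rule sum.cong) auto
  also have "\<dots> = (if mg_tgt G ee = q \<and> k = \<sigma> ee ii then 1 else 0)"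
    using sum_delta_conj[OF fs(2), of ee "inv (\<sigma> ee) k = ii"] ee iff by simp
  finally show ?thesis unfolding divg_def using 1 by simp
qed

lemma wflow_div:
  assumes fE: "finite (mg_edges G)" and perms: "\<forall>e\<in>mg_edges G. \<sigma> e permutes {..<n}"
  shows "is_walk G u w v \<Longrightarrow> divg G \<sigma> (wflow \<sigma> w i) q k
     = (if q = u \<and> k = i then 1 else 0) - (if q = v \<and> k = transport \<sigma> w i then 1 else 0)"
proof (induction w arbitrary: u i)
  case Nil thus ?case by (simp add: divg_zero)
next
  case (Cons a w)
  obtain ee b where a: "a = (ee, b)" by (cases a)
  show ?case
  proof (cases b)
    case True
    hence e: "ee \<in> mg_edges G" "is_walk G (mg_tgt G ee) w v" "mg_src G ee = u" using Cons.prems a by auto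
    have p: "\<sigma> ee permutes {..<n}" using perms e by blast
    have "divg G \<sigma> (wflow \<sigma> (a # w) i) q k
       = divg G \<sigma> (\<lambda>e k. if e = ee \<and> k = i then 1 else 0) q k + divg G \<sigma> (wflow \<sigma> w (\<sigma> ee i)) q k"
      unfolding a using True divg_add[of G \<sigma> "\<lambda>e k. if e = ee \<and> k = i then 1 else 0" "wflow \<sigma> w (\<sigma> ee i)" q k]
      by simp
    also have "\<dots> = (if q = u \<and> k = i then 1 else 0) - (if q = v \<and> k = transport \<sigma> (a # w) i then 1 else 0)"
      unfolding divg_delta[where \<sigma>=\<sigma> and ii=i, OF fE e(1) p] Cons.IH[OF e(2)] using e a True by auto
    finally show ?thesis .
  next
    case False
    hence e: "ee \<in> mg_edges G" "is_walk G (mg_src G ee) w v" "mg_tgt G ee = u" using Cons.prems a by auto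
    have p: "\<sigma> ee permutes {..<n}" using perms e by blast
    let ?i = "inv (\<sigma> ee) i"
    have "divg G \<sigma> (wflow \<sigma> (a # w) i) q k
       = - divg G \<sigma> (\<lambda>e k. if e = ee \<and> k = ?i then 1 else 0) q k + divg G \<sigma> (wflow \<sigma> w ?i) q k"
      unfolding a using False divg_neg_add[of G \<sigma> "\<lambda>e k. if e = ee \<and> k = ?i then 1 else 0" "wflow \<sigma> w ?i" q k]
      by simp
    also have "\<dots> = (if q = u \<and> k = i then 1 else 0) - (if q = v \<and> k = transport \<sigma> (a # w) i then 1 else 0)"
      unfolding divg_delta[where \<sigma>=\<sigma> and ii="inv (\<sigma> ee) i", OF fE e(1) p] Cons.IH[OF e(2)] using e a False permutes_inverses(1)[OF p, of i] by auto
    finally show ?thesis .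
  qed
qed

lemma sum_fam:
  assumes sm: "simple_model G" and K: "inv_fam G n \<sigma> K" and perms: "\<forall>e\<in>mg_edges G. \<sigma> e permutes {..<n}"
  shows "(\<Sum>v\<in>mg_verts G. \<Sum>j\<in>K v. \<Sum>e\<in>{e\<in>mg_edges G. mg_tgt G e = v}. g e (inv (\<sigma> e) j))
       = (\<Sum>e\<in>mg_edges G. \<Sum>i\<in>K (mg_src G e). g e i)"
proof -
  note f = sm_facts[OF sm]
  have "(\<Sum>v\<in>mg_verts G. \<Sum>j\<in>K v. \<Sum>e\<in>{e\<in>mg_edges G. mg_tgt G e = v}. g e (inv (\<sigma> e) j))
      = (\<Sum>v\<in>mg_verts G. \<Sum>e\<in>{e\<in>mg_edges G. mg_tgt G e = v}. \<Sum>j\<in>K (mg_tgt G e). g e (inv (\<sigma> e) j))"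
    by (intro sum.cong refl, subst sum.swap) auto
  also have "\<dots> = (\<Sum>e\<in>mg_edges G. \<Sum>j\<in>K (mg_tgt G e). g e (inv (\<sigma> e) j))"
    by (rule sum.group) (use f in auto)
  also have "\<dots> = (\<Sum>e\<in>mg_edges G. \<Sum>i\<in>K (mg_src G e). g e i)"
  proof (rule sum.cong[OF refl])
    fix e assume e: "e \<in> mg_edges G"
    have p: "\<sigma> e permutes {..<n}" using perms e by blast
    have "(\<Sum>i\<in>K (mg_src G e). g e (inv (\<sigma> e) (\<sigma> e i))) = (\<Sum>j\<in>K (mg_tgt G e). g e (inv (\<sigma> e) j))"
      by (rule sum.reindex_bij_betw[OF inv_fam_bij[OF K p e]]) (use f e in auto)
    thus "(\<Sum>j\<in>K (mg_tgt G e). g e (inv (\<sigma> e) j)) = (\<Sum>i\<in>K (mg_src G e). g e i)"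
      using permutes_inverses(2)[OF p] by simp
  qed
  finally show ?thesis .
qed



lemma flow_exists:
  assumes cc: "compact_connected_metric_graph G" and vb: "vbundle G n D"
    and K0: "\<And>K. inv_fam G n (\<lambda>e. fst (D e)) K \<Longrightarrow> kdeg G D K = 0"
  shows "\<exists>x. \<forall>q\<in>mg_verts G. \<forall>k<n. divg G (\<lambda>e. fst (D e)) x q k
           = - (\<Sum>e\<in>{e\<in>mg_edges G. mg_tgt G e = q}. snd (snd (D e)) (inv (fst (D e)) k))"
proof -
  have sm: "simple_model G" and con: "connected_mgraph G" using cc unfolding compact_connected_metric_graph_def by auto
  note f = sm_facts[OF sm]
  let ?\<sigma> = "\<lambda>e. fst (D e)"
  let ?s = "\<lambda>e. snd (snd (D e))"
  have perms: "\<forall>e\<in>mg_edges G. ?\<sigma> e permutes {..<n}" using vb unfolding vbundle_def by blast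
  obtain v0 where v0: "v0 \<in> mg_verts G" using sm unfolding simple_model_def by blast
  define R where "R v j = {i. i < n \<and> (\<exists>w. is_walk G v0 w v \<and> transport ?\<sigma> w i = j)}" for v j
  define ri where "ri v j = Min (R v j)" for v j
  have Rfin: "finite (R v j)" for v j unfolding R_def by (rule finite_subset[of _ "{..<n}"]) auto
  have Rne: "R v j \<noteq> {}" if v: "v \<in> mg_verts G" and j: "j < n" for v j
  proof -
    obtain w' where w': "is_walk G v w' v0" using con v v0 unfolding connected_mgraph_def by blast
    have "transport ?\<sigma> w' j < n" using transport_lt[OF perms w' j] .
    moreover have "is_walk G v0 (revw w') v" using revw_walk[OF w'] .
    moreover have "transport ?\<sigma> (revw w') (transport ?\<sigma> w' j) = j" using revw_transport[OF perms w'] .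
    ultimately show ?thesis unfolding R_def by blast
  qed
  have riR: "ri v j \<in> R v j" if "v \<in> mg_verts G" "j < n" for v j
    unfolding ri_def using Min_in[OF Rfin Rne[OF that]] .
  have Req: "R (mg_src G e) j = R (mg_tgt G e) (?\<sigma> e j)" if e: "e \<in> mg_edges G" and j: "j < n" for e j
  proof (intro set_eqI iffI)
    fix i assume "i \<in> R (mg_src G e) j"
    then obtain w where w: "i < n" "is_walk G v0 w (mg_src G e)" "transport ?\<sigma> w i = j" unfolding R_def by blast
    have "is_walk G v0 (w @ [(e, True)]) (mg_tgt G e)" using is_walk_append[OF w(2) walk_single_T[OF e]] .
    moreover have "transport ?\<sigma> (w @ [(e, True)]) i = ?\<sigma> e j" using w(3) by (simp add: transport_append)
    ultimately show "i \<in> R (mg_tgt G e) (?\<sigma> e j)" unfolding R_def using w(1) by blast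
  next
    fix i assume "i \<in> R (mg_tgt G e) (?\<sigma> e j)"
    then obtain w where w: "i < n" "is_walk G v0 w (mg_tgt G e)" "transport ?\<sigma> w i = ?\<sigma> e j" unfolding R_def by blast
    have "is_walk G v0 (w @ [(e, False)]) (mg_src G e)" using is_walk_append[OF w(2) walk_single_F[OF e]] .
    moreover have "transport ?\<sigma> (w @ [(e, False)]) i = j" using w(3)
      permutes_inverses(2)[OF perms[rule_format, OF e]] by (simp add: transport_append)
    ultimately show "i \<in> R (mg_src G e) j" unfolding R_def using w(1) by blast
  qed
  define W where "W v j = (SOME w. is_walk G v0 w v \<and> transport ?\<sigma> w (ri v j) = j)" for v j
  have W: "is_walk G v0 (W v j) v \<and> transport ?\<sigma> (W v j) (ri v j) = j" if "v \<in> mg_verts G" "j < n" for v j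
  proof -
    have "\<exists>w. is_walk G v0 w v \<and> transport ?\<sigma> w (ri v j) = j" using riR[OF that] unfolding R_def by blast
    thus ?thesis unfolding W_def by (rule someI_ex)
  qed
  define d where "d v j = - (\<Sum>e\<in>{e\<in>mg_edges G. mg_tgt G e = v}. ?s e (inv (?\<sigma> e) j))" for v j
  define P where "P = mg_verts G \<times> {..<n}"
  have fP: "finite P" unfolding P_def using f by simp
  define x where "x = (\<lambda>e k. \<Sum>p\<in>P. (- d (fst p) (snd p)) * wflow ?\<sigma> (W (fst p) (snd p)) (ri (fst p) (snd p)) e k)"
  have Kfam: "inv_fam G n ?\<sigma> (\<lambda>v. {j\<in>{..<n}. ri v j = k})" for k
    unfolding inv_fam_def
  proof (intro conjI ballI allI impI)
    fix e j assume e: "e \<in> mg_edges G" and j: "j < n"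
    have "?\<sigma> e j < n" using permutes_in_image[OF perms[rule_format, OF e]] j by simp
    moreover have "ri (mg_src G e) j = ri (mg_tgt G e) (?\<sigma> e j)" unfolding ri_def using Req[OF e j] by simp
    ultimately show "j \<in> {j\<in>{..<n}. ri (mg_src G e) j = k} \<longleftrightarrow> ?\<sigma> e j \<in> {j\<in>{..<n}. ri (mg_tgt G e) j = k}"
      using j by simp
  qed auto
  have Z: "(\<Sum>p\<in>P. if ri (fst p) (snd p) = k then d (fst p) (snd p) else 0) = 0" for k
  proof -
    have "(\<Sum>p\<in>P. if ri (fst p) (snd p) = k then d (fst p) (snd p) else 0)
        = (\<Sum>v\<in>mg_verts G. \<Sum>j\<in>{..<n}. if ri v j = k then d v j else 0)"
      unfolding P_def by (simp add: sum.cartesian_product case_prod_beta)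
    also have "\<dots> = (\<Sum>v\<in>mg_verts G. \<Sum>j\<in>{j\<in>{..<n}. ri v j = k}. d v j)"
      by (rule sum.cong[OF refl], rule sum.inter_filter[symmetric]) simp
    also have "\<dots> = - (\<Sum>v\<in>mg_verts G. \<Sum>j\<in>{j\<in>{..<n}. ri v j = k}. \<Sum>e\<in>{e\<in>mg_edges G. mg_tgt G e = v}. ?s e (inv (?\<sigma> e) j))"
      unfolding d_def by (simp add: sum_negf)
    also have "\<dots> = - kdeg G D (\<lambda>v. {j\<in>{..<n}. ri v j = k})"
      unfolding kdeg_def using sum_fam[OF sm Kfam perms, where g = ?s] by simp
    also have "\<dots> = 0" using K0[OF Kfam] by simp
    finally show ?thesis .
  qed
  have "divg G ?\<sigma> x q k = - (\<Sum>e\<in>{e\<in>mg_edges G. mg_tgt G e = q}. ?s e (inv (?\<sigma> e) k))"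
    if q: "q \<in> mg_verts G" and k: "k < n" for q k
  proof -
    have "divg G ?\<sigma> x q k = (\<Sum>p\<in>P. (- d (fst p) (snd p)) * divg G ?\<sigma> (wflow ?\<sigma> (W (fst p) (snd p)) (ri (fst p) (snd p))) q k)"
      unfolding x_def by (rule divg_sum)
    also have "\<dots> = (\<Sum>p\<in>P. (if p = (q, k) then d (fst p) (snd p) else 0)
          - (if q = v0 then (if ri (fst p) (snd p) = k then d (fst p) (snd p) else 0) else 0))"
    proof (rule sum.cong[OF refl])
      fix p assume p: "p \<in> P"
      have pv: "fst p \<in> mg_verts G" "snd p < n" using p unfolding P_def by auto
      note Wp = W[OF pv]
      have "divg G ?\<sigma> (wflow ?\<sigma> (W (fst p) (snd p)) (ri (fst p) (snd p))) q k
          = (if q = v0 \<and> k = ri (fst p) (snd p) then 1 else 0) - (if q = fst p \<and> k = snd p then 1 else 0)"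
        using wflow_div[OF f(2) perms, of v0 "W (fst p) (snd p)" "fst p" "ri (fst p) (snd p)" q k] Wp by simp
      moreover have "(q = fst p \<and> k = snd p) \<longleftrightarrow> p = (q, k)" by (cases p) auto
      ultimately show "(- d (fst p) (snd p)) * divg G ?\<sigma> (wflow ?\<sigma> (W (fst p) (snd p)) (ri (fst p) (snd p))) q k
          = (if p = (q, k) then d (fst p) (snd p) else 0)
          - (if q = v0 then (if ri (fst p) (snd p) = k then d (fst p) (snd p) else 0) else 0)"
        by auto
    qed
    also have "\<dots> = (\<Sum>p\<in>P. if p = (q, k) then d (fst p) (snd p) else 0)
          - (if q = v0 then (\<Sum>p\<in>P. if ri (fst p) (snd p) = k then d (fst p) (snd p) else 0) else 0)"
      by (simp add: sum_subtractf)
    also have "\<dots> = d q k" using Z fP q k unfolding P_def by (simp add: sum.delta')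
    finally show ?thesis unfolding d_def .
  qed
  thus ?thesis by blast
qed

lemma part1_bwd:
  assumes cc: "compact_connected_metric_graph G" and ss: "semistable G n D" and d0: "degree G n D = 0"
  shows "\<exists>L. local_system G n L \<and> bundle_iso G n D (E_of L)"
proof -
  have sm: "simple_model G" using cc unfolding compact_connected_metric_graph_def by auto
  note f = sm_facts[OF sm]
  have vb: "vbundle G n D" using ss unfolding semistable_def by blast
  let ?\<sigma> = "\<lambda>e. fst (D e)"
  let ?s = "\<lambda>e. snd (snd (D e))"
  have perms: "\<forall>e\<in>mg_edges G. ?\<sigma> e permutes {..<n}" using vb unfolding vbundle_def by blast
  obtain x where x: "\<And>q k. q \<in> mg_verts G \<Longrightarrow> k < n \<Longrightarrow> divg G ?\<sigma> x q k
           = - (\<Sum>e\<in>{e\<in>mg_edges G. mg_tgt G e = q}. ?s e (inv (?\<sigma> e) k))"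
    using flow_exists[OF cc vb kdeg_zero[OF cc ss d0]] by blast
  define r where "r v k e = (if mg_src G e = v then x e k else ?s e (inv (?\<sigma> e) k) - x e (inv (?\<sigma> e) k))" for v k e
  define L where "L e = (?\<sigma> e, \<lambda>i. fst (snd (D e)) i + real_of_int (r (mg_tgt G e) (?\<sigma> e i) e) * mg_len G e)" for e
  define \<phi> :: "'a \<Rightarrow> 'b ssec" where "\<phi> v = (id, \<lambda>_. 0, r v)" for v
  have ls: "local_system G n L" unfolding local_system_def L_def using perms by simp
  have "iso_data G n D (E_of L) \<phi>"
    unfolding iso_data_def
  proof (intro conjI ballI allI impI)
    fix v assume v: "v \<in> mg_verts G"
    show "star_sec G n v (\<phi> v)" unfolding star_sec_def
    proof (intro conjI allI impI)
      show "fst (\<phi> v) permutes {..<n}" unfolding \<phi>_def by (simp add: permutes_id)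
    next
      fix k assume k: "k < n"
      have "(\<Sum>e\<in>{e\<in>mg_edges G. mg_src G e = v \<or> mg_tgt G e = v}. snd (snd (\<phi> v)) k e)
        = (\<Sum>e\<in>{e\<in>mg_edges G. mg_src G e = v}. r v k e) + (\<Sum>e\<in>{e\<in>mg_edges G. mg_tgt G e = v}. r v k e)"
        unfolding \<phi>_def using inc_split[OF sm] by simp
      also have "(\<Sum>e\<in>{e\<in>mg_edges G. mg_src G e = v}. r v k e) = (\<Sum>e\<in>{e\<in>mg_edges G. mg_src G e = v}. x e k)"
        unfolding r_def by (intro sum.cong refl) auto
      also have "(\<Sum>e\<in>{e\<in>mg_edges G. mg_tgt G e = v}. r v k e)
          = (\<Sum>e\<in>{e\<in>mg_edges G. mg_tgt G e = v}. ?s e (inv (?\<sigma> e) k) - x e (inv (?\<sigma> e) k))"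
        unfolding r_def using f(5) by (intro sum.cong refl) auto
      finally show "(\<Sum>e\<in>{e\<in>mg_edges G. mg_src G e = v \<or> mg_tgt G e = v}. snd (snd (\<phi> v)) k e) = 0"
        using x[OF v k] unfolding divg_def by (simp add: sum_subtractf)
    qed
  next
    fix e i assume e: "e \<in> mg_edges G" and i: "i < n"
    have ne: "mg_src G e \<noteq> mg_tgt G e" using f(5)[OF e] .
    have inv1: "inv (?\<sigma> e) (?\<sigma> e i) = i" using permutes_inverses(2)[OF perms[rule_format, OF e]] .
    show "fst (E_of L e) (fst (\<phi> (mg_src G e)) i) = fst (\<phi> (mg_tgt G e)) (fst (D e) i)"
      unfolding E_of_def L_def \<phi>_def by simp
    show "snd (snd (\<phi> (mg_src G e))) i e + snd (snd (E_of L e)) (fst (\<phi> (mg_src G e)) i)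
        = snd (snd (D e)) i - snd (snd (\<phi> (mg_tgt G e))) (fst (D e) i) e"
      unfolding E_of_def \<phi>_def r_def using ne inv1 by simp
    show "fst (snd (\<phi> (mg_src G e))) i + fst (snd (E_of L e)) (fst (\<phi> (mg_src G e)) i)
        = fst (snd (D e)) i + fst (snd (\<phi> (mg_tgt G e))) (fst (D e) i)
          + real_of_int (snd (snd (\<phi> (mg_tgt G e))) (fst (D e) i) e) * mg_len G e"
      unfolding E_of_def \<phi>_def L_def by simp
  qed
  hence "bundle_iso G n D (E_of L)" using bundle_iso_iff[OF sm] vb vb_E_of[OF ls] by blast
  thus ?thesis using ls by blast
qed

theorem theorem5p4:
  fixes G :: "('v, 'e) mgraph" and n :: nat
  assumes "compact_connected_metric_graph G" and "1 \<le> n"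
  shows "(\<forall>D. vbundle G n D \<longrightarrow>
            ((\<exists>L. local_system G n L \<and> bundle_iso G n D (E_of L))
             \<longleftrightarrow> semistable G n D \<and> degree G n D = 0))
       \<and> (\<forall>L. local_system G n L \<longrightarrow>
            (stable G n (E_of L) \<longleftrightarrow> indecomposable G n L))
       \<and> (\<forall>L1 L2. local_system G n L1 \<longrightarrow> local_system G n L2 \<longrightarrow>
            (bundle_iso G n (E_of L1) (E_of L2)
             \<longleftrightarrow> (\<exists>\<pi>. cover_iso G n L1 L2 \<pi> \<and> same_jac_class G n L1 L2 \<pi>)))"
proof -
  have sm: "simple_model G" using assms(1) unfolding compact_connected_metric_graph_def by auto
  show ?thesis
    using part1_fwd[OF sm] part1_bwd[OF assms(1)] part_stable[OF assms(1)] part2[OF sm] by blast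
qed


end
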